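(* In the setting $N=2$ with $\rho<1$, assume additionally $A_{ij}''(1)<\infty$ for all $i,j$ and $\mathbb E[B^2]<\infty$. Then the mean stationary number of customers just after a departure, $\mathbb E[X]=F'(1)$, equals $$\mathbb E[X]=\frac{\rho}{2}+\frac{\mathrm{Var}(A)}{2(1-\rho)}+\frac{\mathbb E[B(B-1)]}{2\mathbb E[B]}+\frac{-\rho+\mathbb E[B](f_1(0)\alpha_1+f_2(0)\alpha_2)+\rho(\alpha_{11}+\alpha_{22})+\alpha_{12}\alpha_{21}-\alpha_{11}\alpha_{22}}{(P_{12}+P_{21})(1-\rho)},$$ where $f_1(0),f_2(0)$ are given by $f_1(0)=\frac{1-\rho}{\mathbb E[B]}\frac{A_{11}(\hat z)-\hat z}{A_{11}(\hat z)+A_{12}(\hat z)-\hat z}$, $f_2(0)=\frac{1-\rho}{\mathbb E[B]}\frac{A_{22}(\hat z)-\hat z}{A_{21}(\hat z)+A_{22}(\hat z)-\hat z}$, with $\hat z$ the zero in $|z|<1$ of $(z-A_{11}(z))(z-A_{22}(z))-A_{12}(z)A_{21}(z)$.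
   Context: $N=2$. For $i,j\in\{1,2\}$ let $A_{ij}(z)=\sum_{k\ge0}a_{ij}(k)z^k$ with $a_{ij}(k)\ge0$, $P_{ij}=A_{ij}(1)$, $P$ stochastic and irreducible with stationary distribution $\pi=(\pi_1,\pi_2)$, $\alpha_{ij}=A_{ij}'(1)$, $\alpha_i=\alpha_{i1}+\alpha_{i2}$, $\rho=\pi_1\alpha_1+\pi_2\alpha_2<1$, $A_i(z)=A_{i1}(z)+A_{i2}(z)$. $\mathrm{Var}(A)$ is the variance of the stationary number of arrivals during a service, i.e. of the random variable with generating function $\pi_1A_1(z)+\pi_2A_2(z)$: $\mathrm{Var}(A)=\sum_i\pi_iA_i''(1)+\rho-\rho^2$. $B$ is a positive-integer-valued random variable with generating function $B(z)$. The process: $(A_n,J_{n+1})_{n\ge1}$ with $\mathbb P(A_n=k,J_{n+1}=j\mid J_n=i,\text{past})=a_{ij}(k)$; $B_n$ i.i.d. copies of $B$ independent of everything; $X_n=X_{n-1}-1+A_n$ if $X_{n-1}\ge1$, $X_n=A_n+B_n-1$ if $X_{n-1}=0$. $F(z)=\lim_n\mathbb E[z^{X_n}]$ is the stationary generating function, and $f_j(0)=\lim_n\mathbb P(X_n=0,J_{n+1}=j)$. *)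

theory Defs
  imports "HOL-Analysis.Analysis"
begin

text \<open>Modes (phases) are indexed by the natural numbers 1 and 2.
  a i j k = a_{ij}(k); b m = P(B = m).\<close>

definition gf :: "(nat \<Rightarrow> real) \<Rightarrow> complex \<Rightarrow> complex" where
  "gf c z = (\<Sum>k. complex_of_real (c k) * z ^ k)"

definition mom1 :: "(nat \<Rightarrow> real) \<Rightarrow> real" where
  "mom1 c = (\<Sum>k. real k * c k)"

definition fmom2 :: "(nat \<Rightarrow> real) \<Rightarrow> real" where
  "fmom2 c = (\<Sum>k. real k * (real k - 1) * c k)"

definition Pm :: "(nat \<Rightarrow> nat \<Rightarrow> nat \<Rightarrow> real) \<Rightarrow> nat \<Rightarrow> nat \<Rightarrow> real" where
  "Pm a i j = (\<Sum>k. a i j k)"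

definition alpha :: "(nat \<Rightarrow> nat \<Rightarrow> nat \<Rightarrow> real) \<Rightarrow> nat \<Rightarrow> nat \<Rightarrow> real" where
  "alpha a i j = mom1 (a i j)"

definition alpha_row :: "(nat \<Rightarrow> nat \<Rightarrow> nat \<Rightarrow> real) \<Rightarrow> nat \<Rightarrow> real" where
  "alpha_row a i = alpha a i 1 + alpha a i 2"

definition rho :: "(nat \<Rightarrow> nat \<Rightarrow> nat \<Rightarrow> real) \<Rightarrow> (nat \<Rightarrow> real) \<Rightarrow> real" where
  "rho a \<pi> = \<pi> 1 * alpha_row a 1 + \<pi> 2 * alpha_row a 2"

definition VarA :: "(nat \<Rightarrow> nat \<Rightarrow> nat \<Rightarrow> real) \<Rightarrow> (nat \<Rightarrow> real) \<Rightarrow> real" where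
  "VarA a \<pi> = \<pi> 1 * (fmom2 (a 1 1) + fmom2 (a 1 2)) + \<pi> 2 * (fmom2 (a 2 1) + fmom2 (a 2 2))
      + rho a \<pi> - (rho a \<pi>)^2"

text \<open>One step of the chain (X_n, J_{n+1}).  q (x, i) = P(X_{n-1} = x, J_n = i);
  the result at (y, j) is P(X_n = y, J_{n+1} = j).
  If X_{n-1} = x \<ge> 1 then X_n = x - 1 + A_n, so A_n = y + 1 - x;
  if X_{n-1} = 0 then X_n = A_n + B_n - 1 with B_n = m \<ge> 1, so A_n = y + 1 - m.\<close>
definition qstep :: "(nat \<Rightarrow> nat \<Rightarrow> nat \<Rightarrow> real) \<Rightarrow> (nat \<Rightarrow> real) \<Rightarrow> (nat \<times> nat \<Rightarrow> real) \<Rightarrow> (nat \<times> nat \<Rightarrow> real)" where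
  "qstep a b q = (\<lambda>(y, j). \<Sum>i\<in>{1, 2}.
      (\<Sum>x\<in>{1..y+1}. q (x, i) * a i j (y + 1 - x))
      + q (0, i) * (\<Sum>m\<in>{1..y+1}. a i j (y + 1 - m) * b m))"

text \<open>qdist a b x0 i0 n (x, j) = P(X_n = x, J_{n+1} = j) when X_0 = x0, J_1 = i0.\<close>
definition qdist :: "(nat \<Rightarrow> nat \<Rightarrow> nat \<Rightarrow> real) \<Rightarrow> (nat \<Rightarrow> real) \<Rightarrow> nat \<Rightarrow> nat \<Rightarrow> nat \<Rightarrow> (nat \<times> nat \<Rightarrow> real)" where
  "qdist a b x0 i0 n = (qstep a b ^^ n) (\<lambda>s. if s = (x0, i0) then 1 else 0)"

end

theory Submission
  imports Defs
begin


definition sp :: "nat \<Rightarrow> real \<Rightarrow> real" where "sp k z = (\<Sum>l<k. z^l)"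
definition rp :: "nat \<Rightarrow> real \<Rightarrow> real" where "rp k z = (\<Sum>l<k. sp l z)"

lemma sp_id: "1 - z^k = (1-z) * sp k z"
  unfolding sp_def by (rule one_diff_power_eq)

lemma rp_id: "real k - sp k z = (1-z) * rp k z"
proof (induction k)
  case 0 then show ?case by (simp add: sp_def rp_def)
next
  case (Suc k)
  have "real (Suc k) - sp (Suc k) z = (real k - sp k z) + (1 - z^k)"
    by (simp add: sp_def)
  also have "\<dots> = (1-z) * rp k z + (1-z) * sp k z" using Suc sp_id by simp
  also have "\<dots> = (1-z) * rp (Suc k) z" by (simp add: rp_def algebra_simps)
  finally show ?case .
qed

lemma sp_nonneg: "0 \<le> z \<Longrightarrow> 0 \<le> sp k z"
  unfolding sp_def by (intro sum_nonneg) auto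

lemma sp_le: "0 \<le> z \<Longrightarrow> z \<le> 1 \<Longrightarrow> sp k z \<le> real k"
proof -
  assume "0 \<le> z" "z \<le> 1"
  then have "(\<Sum>l<k. z^l) \<le> (\<Sum>l<k. (1::real))"
    by (intro sum_mono) (simp add: power_le_one)
  then show ?thesis by (simp add: sp_def)
qed

lemma sp_one: "sp k 1 = real k" by (simp add: sp_def)

lemma rp_nonneg: "0 \<le> z \<Longrightarrow> 0 \<le> rp k z"
  unfolding rp_def by (intro sum_nonneg sp_nonneg)

lemma rp_le: "0 \<le> z \<Longrightarrow> z \<le> 1 \<Longrightarrow> rp k z \<le> real k * (real k - 1) / 2"
proof (induction k)
  case 0 then show ?case by (simp add: rp_def)
next
  case (Suc k)
  have "rp (Suc k) z = rp k z + sp k z" by (simp add: rp_def)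
  also have "\<dots> \<le> real k * (real k - 1) / 2 + real k" using Suc sp_le by (intro add_mono) auto
  also have "\<dots> = real (Suc k) * (real (Suc k) - 1) / 2" by (simp add: field_simps)
  finally show ?case .
qed

lemma rp_one: "rp k 1 = real k * (real k - 1) / 2"
proof (induction k)
  case 0 then show ?case by (simp add: rp_def)
next
  case (Suc k)
  have "rp (Suc k) 1 = rp k 1 + sp k 1" by (simp add: rp_def)
  then show ?case using Suc by (simp add: sp_one field_simps)
qed

lemma sp_cont: "continuous_on A (sp k)"
  unfolding sp_def by (intro continuous_intros)

lemma rp_cont: "continuous_on A (rp k)"
  unfolding rp_def sp_def by (intro continuous_intros)

lemma cont_series:
  fixes g :: "nat \<Rightarrow> real \<Rightarrow> real"
  assumes "\<And>n. continuous_on {0..1} (g n)" "\<And>n x. x \<in> {0..1} \<Longrightarrow> norm (g n x) \<le> M n" "summable M"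
  shows "continuous_on {0..1} (\<lambda>x. \<Sum>n. g n x)"
proof (rule uniform_limit_theorem[OF _ Weierstrass_m_test[OF assms(2,3)]])
  show "\<forall>\<^sub>F n in sequentially. continuous_on {0..1} (\<lambda>x. \<Sum>i<n. g i x)"
    using assms(1) by (intro always_eventually allI continuous_on_sum) auto
qed auto

lemma tendsto_left1:
  assumes "continuous_on {0..1} h" shows "(h \<longlongrightarrow> h 1) (at_left (1::real))"
proof -
  have "(h \<longlongrightarrow> h 1) (at 1 within {0..1})" using assms unfolding continuous_on_def by auto
  moreover have "at 1 within {0..1} = at_left (1::real)" by (rule at_within_Icc_at_left) simp
  ultimately show ?thesis by simp
qed

lemma ev_left1: "eventually (\<lambda>z. 0 < z \<and> z < (1::real)) (at_left 1)"
  using eventually_at_left_real[of 0 "1::real"] by simp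

lemma pow_summable:
  fixes c :: "nat \<Rightarrow> real"
  assumes c0: "\<And>k. 0 \<le> c k" and cs: "summable c" and z: "0 \<le> z" "z \<le> 1"
  shows "summable (\<lambda>k. c k * z^k)"
  by (rule summable_comparison_test'[OF cs, of 0]) (use c0 z in \<open>auto simp: abs_mult power_le_one intro!: mult_left_le\<close>)

lemma SL1:
  fixes c :: "nat \<Rightarrow> real"
  assumes c0: "\<And>k. 0 \<le> c k" and cs: "summable c" and z: "0 \<le> z" "z < 1"
  shows "summable (\<lambda>k. c k * sp k z) \<and> (\<Sum>k. c k * sp k z) = (suminf c - (\<Sum>k. c k * z^k)) / (1-z)"
proof -
  have s2: "summable (\<lambda>k. c k * z^k)" using pow_summable[OF c0 cs] z by auto
  have eq: "(\<lambda>k. c k * sp k z) = (\<lambda>k. (c k - c k * z^k) / (1-z))"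
  proof
    fix k
    have "c k - c k * z^k = c k * (1 - z^k)" by (simp add: algebra_simps)
    also have "\<dots> = (1-z) * (c k * sp k z)" by (simp add: sp_id)
    finally show "c k * sp k z = (c k - c k * z^k) / (1-z)" using z by simp
  qed
  have s3: "(\<lambda>k. c k - c k * z^k) sums (suminf c - (\<Sum>k. c k * z^k))"
    by (intro sums_diff summable_sums cs s2)
  have "(\<lambda>k. (c k - c k * z^k) / (1-z)) sums ((suminf c - (\<Sum>k. c k * z^k)) / (1-z))"
    by (rule sums_divide[OF s3])
  then show ?thesis unfolding eq by (simp add: sums_iff)
qed

lemma mom1_summable:
  fixes c :: "nat \<Rightarrow> real"
  assumes c0: "\<And>k. 0 \<le> c k" and cs: "summable c" and c2: "summable (\<lambda>k. real k * (real k - 1) * c k)"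
  shows "summable (\<lambda>k. real k * c k)"
proof (rule summable_comparison_test'[OF summable_add[OF c2 cs], of 0])
  fix k :: nat
  have "real k \<le> real k * (real k - 1) + 1"
  proof (cases "k \<le> 1")
    case True then show ?thesis by (cases k) auto
  next
    case False then have "real k \<ge> 2" by simp
    then have "2 * real k \<le> real k * real k" using mult_right_mono[of 2 "real k" "real k"] by simp
    then show ?thesis by (simp add: algebra_simps)
  qed
  then have "real k * c k \<le> (real k * (real k - 1) + 1) * c k" using c0 by (intro mult_right_mono) auto
  then show "norm (real k * c k) \<le> real k * (real k - 1) * c k + c k" using c0 by (simp add: algebra_simps)
qed

lemma SL2:
  fixes c :: "nat \<Rightarrow> real"
  assumes c0: "\<And>k. 0 \<le> c k" and cs: "summable c" and c2: "summable (\<lambda>k. real k * (real k - 1) * c k)"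
    and z: "0 \<le> z" "z \<le> 1"
  shows "summable (\<lambda>k. c k * rp k z) \<and> summable (\<lambda>k. c k * sp k z)
     \<and> (\<Sum>k. c k * sp k z) = (\<Sum>k. real k * c k) - (1-z) * (\<Sum>k. c k * rp k z)"
proof -
  have c1: "summable (\<lambda>k. real k * c k)" by (rule mom1_summable[OF c0 cs c2])
  have sr: "summable (\<lambda>k. c k * rp k z)"
  proof (rule summable_comparison_test'[OF summable_divide[OF c2, of 2], of 0])
    fix k :: nat
    have "c k * rp k z \<le> c k * (real k * (real k - 1) / 2)"
      using c0[of k] rp_le[OF z, of k] by (intro mult_left_mono) auto
    moreover have "0 \<le> c k * rp k z" using c0[of k] rp_nonneg[OF z(1), of k] by simp
    ultimately show "norm (c k * rp k z) \<le> real k * (real k - 1) * c k / 2" by (simp add: mult_ac)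
  qed
  have ss: "summable (\<lambda>k. c k * sp k z)"
  proof (rule summable_comparison_test'[OF c1, of 0])
    fix k :: nat
    have "c k * sp k z \<le> c k * real k"
      using c0[of k] sp_le[OF z, of k] by (intro mult_left_mono) auto
    moreover have "0 \<le> c k * sp k z" using c0[of k] sp_nonneg[OF z(1), of k] by simp
    ultimately show "norm (c k * sp k z) \<le> real k * c k" by (simp add: mult.commute)
  qed
  have eq: "(\<lambda>k. c k * sp k z) = (\<lambda>k. real k * c k - (1-z) * (c k * rp k z))"
  proof
    fix k
    have h: "sp k z = real k - (1-z) * rp k z" using rp_id[of k z] by simp
    show "c k * sp k z = real k * c k - (1-z) * (c k * rp k z)"
      unfolding h by (simp add: algebra_simps)
  qed
  have "(\<Sum>k. c k * sp k z) = (\<Sum>k. real k * c k) - (\<Sum>k. (1-z) * (c k * rp k z))"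
    unfolding eq by (intro suminf_diff[symmetric] c1 summable_mult sr)
  also have "(\<Sum>k. (1-z) * (c k * rp k z)) = (1-z) * (\<Sum>k. c k * rp k z)"
    by (intro suminf_mult sr)
  finally show ?thesis using sr ss by simp
qed

lemma SL3:
  fixes c :: "nat \<Rightarrow> real"
  assumes c0: "\<And>k. 0 \<le> c k" and c2: "summable (\<lambda>k. real k * (real k - 1) * c k)"
  shows "continuous_on {0..1} (\<lambda>z. \<Sum>k. c k * rp k z)"
proof (rule cont_series[of _ "\<lambda>k. real k * (real k - 1) * c k / 2"])
  show "continuous_on {0..1} (\<lambda>z. c k * rp k z)" for k by (intro continuous_intros rp_cont)
  show "norm (c k * rp k x) \<le> real k * (real k - 1) * c k / 2" if "x \<in> {0..1}" for k x
  proof -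
    have "c k * rp k x \<le> c k * (real k * (real k - 1) / 2)"
      using that c0[of k] rp_le[of x k] by (intro mult_left_mono) auto
    moreover have "0 \<le> c k * rp k x" using that c0[of k] rp_nonneg[of x k] by simp
    ultimately show ?thesis by (simp add: mult_ac)
  qed
  show "summable (\<lambda>k. real k * (real k - 1) * c k / 2)" by (intro summable_divide c2)
qed

lemma pow_cont:
  fixes c :: "nat \<Rightarrow> real"
  assumes c0: "\<And>k. 0 \<le> c k" and cs: "summable c"
  shows "continuous_on {0..1} (\<lambda>z. \<Sum>k. c k * z^k)"
proof (rule cont_series[of _ c])
  show "continuous_on {0..1} (\<lambda>z. c k * z^k)" for k by (intro continuous_intros)
  show "norm (c k * x^k) \<le> c k" if "x \<in> {0..1}" for k x
    using that c0[of k] by (auto simp: abs_mult power_le_one intro!: mult_left_le)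
qed (rule cs)

lemma abel:
  fixes c :: "nat \<Rightarrow> real"
  assumes c0: "\<And>k. 0 \<le> c k" and cs: "summable c"
    and lim: "((\<lambda>z. \<Sum>x. c x * sp x z) \<longlongrightarrow> L) (at_left 1)"
  shows "((\<lambda>x. real x * c x) has_sum L) UNIV"
proof -
  have part: "(\<Sum>x<N. real x * c x) \<le> L" for N
  proof (rule tendsto_le[OF trivial_limit_at_left_real lim])
    show "((\<lambda>z. \<Sum>x<N. c x * sp x z) \<longlongrightarrow> (\<Sum>x<N. real x * c x)) (at_left 1)"
    proof -
      have "((\<lambda>z. \<Sum>x<N. c x * sp x z) \<longlongrightarrow> (\<Sum>x<N. c x * sp x 1)) (at_left 1)"
        by (intro tendsto_left1 continuous_intros sp_cont)
      then show ?thesis by (simp add: sp_one mult.commute)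
    qed
    show "\<forall>\<^sub>F z in at_left 1. (\<Sum>x<N. c x * sp x z) \<le> (\<Sum>x. c x * sp x z)"
      using ev_left1 proof eventually_elim
      case (elim z)
      then show ?case using SL1[OF c0 cs, of z] c0 sp_nonneg[of z]
        by (intro sum_le_suminf) auto
    qed
  qed
  have s1: "summable (\<lambda>x. real x * c x)"
    by (rule summableI_nonneg_bounded[OF _ part]) (use c0 in auto)
  have le1: "(\<Sum>x. real x * c x) \<le> L" by (rule suminf_le_const[OF s1 part])
  have le2: "L \<le> (\<Sum>x. real x * c x)"
  proof (rule tendsto_le[OF trivial_limit_at_left_real _ lim])
    show "((\<lambda>z. \<Sum>x. real x * c x) \<longlongrightarrow> (\<Sum>x. real x * c x)) (at_left 1)" by simp
    show "\<forall>\<^sub>F z in at_left 1. (\<Sum>x. c x * sp x z) \<le> (\<Sum>x. real x * c x)"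
      using ev_left1 proof eventually_elim
      case (elim z)
      have "c n * sp n z \<le> real n * c n" for n
      proof -
        have "c n * sp n z \<le> c n * real n"
          using c0[of n] sp_le[of z n] elim by (intro mult_left_mono) auto
        then show ?thesis by (simp add: mult.commute)
      qed
      then show ?case using SL1[OF c0 cs, of z] s1 elim
        by (intro suminf_le) auto
    qed
  qed
  have "(\<lambda>x. real x * c x) sums L" using le1 le2 s1 by (simp add: sums_iff)
  then show ?thesis
    by (intro norm_summable_imp_has_sum) (use s1 c0 in auto)
qed



definition G :: "(nat \<Rightarrow> real) \<Rightarrow> 'a::{real_normed_field,banach} \<Rightarrow> 'a" where
  "G c z = (\<Sum>k. of_real (c k) * z^k)"

definition Hc :: "(nat \<times> nat \<Rightarrow> real) \<Rightarrow> (nat \<Rightarrow> real) \<Rightarrow> nat \<Rightarrow> nat \<Rightarrow> real" where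
  "Hc q b i k = q (Suc k, i) + q (0, i) * b (Suc k)"

lemma from12: "\<forall>i\<in>{1,2}. \<forall>j\<in>{1,2}. P i j \<Longrightarrow> i \<in> {1,2} \<Longrightarrow> j \<in> {1,2} \<Longrightarrow> P i j"
  by blast

lemma gf_G: "gf c z = G c z" by (simp add: gf_def G_def)

lemma G_real: "G c (z::real) = (\<Sum>k. c k * z^k)" by (simp add: G_def)

lemma qstep_conv:
  "qstep a b q (y, j) = (\<Sum>i\<in>{1,2}. \<Sum>k\<le>y. Hc q b i k * a i j (y - k))"
proof -
  have e1: "(\<Sum>x\<in>{1..y+1}. q (x, i) * a i j (y + 1 - x)) = (\<Sum>k\<le>y. q (Suc k, i) * a i j (y - k))" for i
  proof -
    have "(\<Sum>x\<in>{1..y+1}. q (x, i) * a i j (y + 1 - x)) = (\<Sum>x\<in>{Suc 0..Suc y}. q (x, i) * a i j (y + 1 - x))"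
      by simp
    also have "\<dots> = (\<Sum>k=0..y. q (Suc k, i) * a i j (y - k))"
      by (subst sum.shift_bounds_cl_Suc_ivl) simp
    finally show ?thesis by (simp add: atMost_atLeast0)
  qed
  have e2: "(\<Sum>m\<in>{1..y+1}. a i j (y + 1 - m) * b m) = (\<Sum>k\<le>y. b (Suc k) * a i j (y - k))" for i
  proof -
    have "(\<Sum>m\<in>{1..y+1}. a i j (y + 1 - m) * b m) = (\<Sum>m\<in>{Suc 0..Suc y}. a i j (y + 1 - m) * b m)"
      by simp
    also have "\<dots> = (\<Sum>k=0..y. a i j (y - k) * b (Suc k))"
      by (subst sum.shift_bounds_cl_Suc_ivl) simp
    finally show ?thesis by (simp add: atMost_atLeast0 mult.commute)
  qed
  have e3: "(\<Sum>x\<in>{1..y+1}. q (x, i) * a i j (y + 1 - x)) + q (0, i) * (\<Sum>m\<in>{1..y+1}. a i j (y + 1 - m) * b m)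
      = (\<Sum>k\<le>y. Hc q b i k * a i j (y - k))" for i
  proof -
    have "(\<Sum>k\<le>y. Hc q b i k * a i j (y - k)) = (\<Sum>k\<le>y. q (Suc k, i) * a i j (y - k)) + q (0, i) * (\<Sum>k\<le>y. b (Suc k) * a i j (y - k))"
      unfolding Hc_def by (simp add: sum.distrib sum_distrib_left algebra_simps)
    then show ?thesis by (simp only: e1 e2)
  qed
  have "qstep a b q (y, j) = (\<Sum>i\<in>{1,2}. (\<Sum>x\<in>{1..y+1}. q (x, i) * a i j (y + 1 - x))
      + q (0, i) * (\<Sum>m\<in>{1..y+1}. a i j (y + 1 - m) * b m))"
    by (simp only: qstep_def prod.case)
  also have "\<dots> = (\<Sum>i\<in>{1,2}. \<Sum>k\<le>y. Hc q b i k * a i j (y - k))"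
    by (intro sum.cong refl e3)
  finally show ?thesis .
qed

lemma norm_pow_summable:
  fixes z :: "'a::{real_normed_field,banach}"
  assumes "summable (\<lambda>k. \<bar>c k\<bar>)" "norm z \<le> 1"
  shows "summable (\<lambda>k. norm (of_real (c k) * z^k))"
proof (rule summable_comparison_test'[OF assms(1), of 0])
  fix k :: nat
  have "norm (of_real (c k) * z^k) = \<bar>c k\<bar> * norm z ^ k" by (simp add: norm_mult norm_power)
  also have "\<dots> \<le> \<bar>c k\<bar> * 1" using assms(2) by (intro mult_left_mono power_le_one) auto
  finally show "norm (norm (of_real (c k) * z^k)) \<le> \<bar>c k\<bar>" by simp
qed

lemma Hc_summable:
  assumes q0: "\<And>x. 0 \<le> q (x, i)" and qs: "summable (\<lambda>x. q (x, i))"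
    and b0: "\<And>m. 0 \<le> b m" and bs: "summable b"
  shows "summable (\<lambda>k. \<bar>Hc q b i k\<bar>)"
proof -
  have "summable (\<lambda>k. Hc q b i k)"
    unfolding Hc_def
    using summable_ignore_initial_segment[OF qs, of 1] summable_ignore_initial_segment[OF bs, of 1]
    by (intro summable_add summable_mult) simp_all
  moreover have "\<And>k. 0 \<le> Hc q b i k" unfolding Hc_def using q0 b0 by simp
  ultimately show ?thesis by simp
qed

lemma GF_step:
  fixes z :: "'a::{real_normed_field,banach}"
  assumes an: "\<forall>i\<in>{1,2}. \<forall>j\<in>{1,2}. \<forall>k. a i j k \<ge> 0"
    and as: "\<forall>i\<in>{1,2}. \<forall>j\<in>{1,2}. summable (a i j)"
    and b0: "\<And>m. 0 \<le> b m" and bs: "summable b"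
    and q0: "\<And>x i. i \<in> {1,2} \<Longrightarrow> 0 \<le> q (x, i)"
    and qs: "\<And>i. i \<in> {1,2} \<Longrightarrow> summable (\<lambda>x. q (x, i))"
    and j: "j \<in> {1,2}" and z: "norm z \<le> 1"
  shows "(\<lambda>y. of_real (qstep a b q (y, j)) * z^y) sums (\<Sum>i\<in>{1,2}. G (Hc q b i) z * G (a i j) z)"
proof -
  have one: "(\<lambda>y. of_real (\<Sum>k\<le>y. Hc q b i k * a i j (y - k)) * z^y) sums (G (Hc q b i) z * G (a i j) z)"
    if i: "i \<in> {1,2}" for i
  proof -
    have s1: "summable (\<lambda>k. norm (of_real (Hc q b i k) * z^k))"
      by (rule norm_pow_summable[OF Hc_summable z]) (use q0 qs b0 bs i in auto)
    have s2: "summable (\<lambda>k. norm (of_real (a i j k) * z^k))"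
    proof (rule norm_pow_summable[OF _ z])
      have "(\<lambda>k. \<bar>a i j k\<bar>) = a i j" using from12[OF an i j] by auto
      moreover have "summable (a i j)" using from12[OF as i j] .
      ultimately show "summable (\<lambda>k. \<bar>a i j k\<bar>)" by simp
    qed
    have "(\<lambda>y. \<Sum>k\<le>y. (of_real (Hc q b i k) * z^k) * (of_real (a i j (y - k)) * z^(y-k))) sums
          ((\<Sum>k. of_real (Hc q b i k) * z^k) * (\<Sum>k. of_real (a i j k) * z^k))"
      by (rule Cauchy_product_sums[OF s1 s2])
    moreover have "(\<Sum>k\<le>y. (of_real (Hc q b i k) * z^k) * (of_real (a i j (y - k)) * z^(y-k)))
        = of_real (\<Sum>k\<le>y. Hc q b i k * a i j (y - k)) * z^y" for y
    proof -
      have "(\<Sum>k\<le>y. (of_real (Hc q b i k) * z^k) * (of_real (a i j (y - k)) * z^(y-k)))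
          = (\<Sum>k\<le>y. of_real (Hc q b i k * a i j (y - k)) * z^y)"
      proof (rule sum.cong[OF refl])
        fix k assume "k \<in> {..y}"
        then have "z^k * z^(y-k) = z^y" by (simp add: power_add[symmetric])
        then show "(of_real (Hc q b i k) * z^k) * (of_real (a i j (y - k)) * z^(y-k))
             = of_real (Hc q b i k * a i j (y - k)) * z^y"
          by (simp add: mult_ac)
      qed
      also have "\<dots> = of_real (\<Sum>k\<le>y. Hc q b i k * a i j (y - k)) * z^y"
        by (simp add: sum_distrib_right)
      finally show ?thesis .
    qed
    ultimately show ?thesis by (simp add: G_def)
  qed
  have "(\<lambda>y. of_real (\<Sum>k\<le>y. Hc q b 1 k * a 1 j (y - k)) * z^y + of_real (\<Sum>k\<le>y. Hc q b 2 k * a 2 j (y - k)) * z^y)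
        sums (G (Hc q b 1) z * G (a 1 j) z + G (Hc q b 2) z * G (a 2 j) z)"
    by (intro sums_add one) auto
  then show ?thesis by (simp add: qstep_conv distrib_right)
qed

lemma H_rel:
  fixes z :: "'a::{real_normed_field,banach}"
  assumes qs: "summable (\<lambda>k. \<bar>q (k, i)\<bar>)" and bs: "summable (\<lambda>k. \<bar>b k\<bar>)" and b00: "b 0 = 0"
    and z: "norm z \<le> 1"
  shows "z * G (Hc q b i) z = G (\<lambda>x. q (x, i)) z - of_real (q (0, i)) * (1 - G b z)"
proof -
  have sq: "summable (\<lambda>k. of_real (q (k, i)) * z^k)"
    by (rule summable_norm_cancel[OF norm_pow_summable[OF qs z]])
  have sb: "summable (\<lambda>k. of_real (b k) * z^k)"
    by (rule summable_norm_cancel[OF norm_pow_summable[OF bs z]])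
  have t1: "(\<lambda>k. of_real (q (Suc k, i)) * z^(Suc k)) sums (G (\<lambda>x. q (x, i)) z - of_real (q (0, i)))"
    using summable_sums[OF sq] unfolding G_def
    by (subst sums_Suc_iff) simp
  have t2: "(\<lambda>k. of_real (b (Suc k)) * z^(Suc k)) sums (G b z)"
    using summable_sums[OF sb] b00 unfolding G_def
    by (subst sums_Suc_iff) simp
  have "(\<lambda>k. of_real (q (Suc k, i)) * z^(Suc k) + of_real (q (0, i)) * (of_real (b (Suc k)) * z^(Suc k))) sums
        (G (\<lambda>x. q (x, i)) z - of_real (q (0, i)) + of_real (q (0, i)) * G b z)"
    by (intro sums_add sums_mult t1 t2)
  moreover have "(\<lambda>k. z * (of_real (Hc q b i k) * z^k)) =
      (\<lambda>k. of_real (q (Suc k, i)) * z^(Suc k) + of_real (q (0, i)) * (of_real (b (Suc k)) * z^(Suc k)))"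
    by (auto simp: Hc_def algebra_simps)
  moreover have "(\<lambda>k. z * (of_real (Hc q b i k) * z^k)) sums (z * G (Hc q b i) z)"
  proof -
    have "summable (\<lambda>k. of_real (Hc q b i k) * z^k)"
    proof (rule summable_norm_cancel[OF norm_pow_summable[OF _ z]])
      have "summable (\<lambda>k. \<bar>q (Suc k, i)\<bar> + \<bar>q (0, i)\<bar> * \<bar>b (Suc k)\<bar>)"
        using summable_ignore_initial_segment[OF qs, of 1] summable_ignore_initial_segment[OF bs, of 1]
        by (intro summable_add summable_mult) simp_all
      then show "summable (\<lambda>k. \<bar>Hc q b i k\<bar>)"
        by (rule summable_comparison_test'[of _ 0]) (auto simp: Hc_def abs_mult intro: abs_triangle_ineq[THEN order.trans])
    qed
    then show ?thesis unfolding G_def by (intro sums_mult summable_sums)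
  qed
  ultimately show ?thesis by (metis (no_types, lifting) sums_unique2 right_diff_distrib mult.right_neutral diff_add_eq diff_diff_eq2)
qed



lemma G_one: "G c (1::real) = suminf c" by (simp add: G_def)

lemma GF_rel:
  fixes z :: "'a::{real_normed_field,banach}"
  assumes an: "\<forall>i\<in>{1,2}. \<forall>j\<in>{1,2}. \<forall>k. a i j k \<ge> 0"
    and as: "\<forall>i\<in>{1,2}. \<forall>j\<in>{1,2}. summable (a i j)"
    and b0: "\<And>m. 0 \<le> b m" and bs: "summable b" and b00: "b 0 = 0"
    and q0: "\<And>x i. i \<in> {1,2} \<Longrightarrow> 0 \<le> q (x, i)"
    and qs: "\<And>i. i \<in> {1,2} \<Longrightarrow> summable (\<lambda>x. q (x, i))"
    and j: "j \<in> {1,2}" and z: "norm z \<le> 1"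
  shows "summable (\<lambda>y. qstep a b q (y, j))"
    and "z * G (\<lambda>y. qstep a b q (y, j)) z
       = (\<Sum>i\<in>{1,2}. G (a i j) z * (G (\<lambda>x. q (x, i)) z - of_real (q (0, i)) * (1 - G b z)))"
proof -
  have S: "(\<lambda>y. of_real (qstep a b q (y, j)) * z^y) sums (\<Sum>i\<in>{1,2}. G (Hc q b i) z * G (a i j) z)"
    by (rule GF_step[OF an as b0 bs q0 qs j z])
  have S1: "(\<lambda>y. of_real (qstep a b q (y, j)) * (1::real)^y) sums (\<Sum>i\<in>{1,2}. G (Hc q b i) (1::real) * G (a i j) 1)"
    using GF_step[OF an as b0 bs q0 qs j, of "1::real"] by simp
  then show "summable (\<lambda>y. qstep a b q (y, j))" by (simp add: sums_iff)
  have HR: "z * G (Hc q b i) z = G (\<lambda>x. q (x, i)) z - of_real (q (0, i)) * (1 - G b z)" if i: "i \<in> {1,2}" for i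
  proof (rule H_rel[where b=b and q=q, OF _ _ b00 z])
    show "summable (\<lambda>k. \<bar>q (k, i)\<bar>)" using q0[OF i] qs[OF i] by simp
    show "summable (\<lambda>k. \<bar>b k\<bar>)" using b0 bs by simp
  qed
  have "G (\<lambda>y. qstep a b q (y, j)) z = (\<Sum>i\<in>{1,2}. G (Hc q b i) z * G (a i j) z)"
    using S unfolding G_def by (simp add: sums_iff)
  then have "z * G (\<lambda>y. qstep a b q (y, j)) z = (\<Sum>i\<in>{1,2}. z * (G (Hc q b i) z * G (a i j) z))"
    by (simp only: sum_distrib_left)
  also have "\<dots> = (\<Sum>i\<in>{1,2}. (z * G (Hc q b i) z) * G (a i j) z)"
    by (simp only: mult.assoc)
  also have "\<dots> = (\<Sum>i\<in>{1,2}. G (a i j) z * (G (\<lambda>x. q (x, i)) z - of_real (q (0, i)) * (1 - G b z)))"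
  proof (rule sum.cong[OF refl])
    fix i :: nat assume i: "i \<in> {1,2}"
    show "z * G (Hc q b i) z * G (a i j) z = G (a i j) z * (G (\<lambda>x. q (x, i)) z - of_real (q (0, i)) * (1 - G b z))"
      unfolding HR[OF i] by (rule mult.commute)
  qed
  finally show "z * G (\<lambda>y. qstep a b q (y, j)) z
       = (\<Sum>i\<in>{1,2}. G (a i j) z * (G (\<lambda>x. q (x, i)) z - of_real (q (0, i)) * (1 - G b z)))" .
qed

lemma qstep_nonneg:
  assumes an: "\<forall>i\<in>{1,2}. \<forall>j\<in>{1,2}. \<forall>k. a i j k \<ge> 0"
    and b0: "\<And>m. 0 \<le> b m"
    and q0: "\<And>x i. i \<in> {1,2} \<Longrightarrow> 0 \<le> q (x, i)"
    and j: "j \<in> {1,2}"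
  shows "0 \<le> qstep a b q (y, j)"
proof -
  have "0 \<le> (\<Sum>x\<in>{1..y+1}. q (x, i) * a i j (y + 1 - x)) + q (0, i) * (\<Sum>m\<in>{1..y+1}. a i j (y + 1 - m) * b m)"
    if i: "i \<in> {1,2}" for i
    using q0[OF i] from12[OF an i j] b0
    by (intro add_nonneg_nonneg mult_nonneg_nonneg sum_nonneg) auto
  then show ?thesis unfolding qstep_def by (simp only: prod.case) (intro sum_nonneg, auto)
qed

locale setting =
  fixes a :: "nat \<Rightarrow> nat \<Rightarrow> nat \<Rightarrow> real" and b :: "nat \<Rightarrow> real"
    and \<pi> :: "nat \<Rightarrow> real" and f :: "nat \<Rightarrow> nat \<Rightarrow> real" and x0 i0 :: nat
  assumes a_nonneg: "\<forall>i\<in>{1,2}. \<forall>j\<in>{1,2}. \<forall>k. a i j k \<ge> 0"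
    and a_summable: "\<forall>i\<in>{1,2}. \<forall>j\<in>{1,2}. summable (a i j)"
    and stochastic: "\<forall>i\<in>{1,2}. Pm a i 1 + Pm a i 2 = 1"
    and irreducible: "Pm a 1 2 > 0" "Pm a 2 1 > 0"
    and stationary: "\<pi> 1 \<ge> 0" "\<pi> 2 \<ge> 0" "\<pi> 1 + \<pi> 2 = 1"
      "\<forall>j\<in>{1,2}. \<pi> j = \<pi> 1 * Pm a 1 j + \<pi> 2 * Pm a 2 j"
    and a_second: "\<forall>i\<in>{1,2}. \<forall>j\<in>{1,2}. summable (\<lambda>k. real k * (real k - 1) * a i j k)"
    and rho_lt1: "rho a \<pi> < 1"
    and b_nonneg: "\<forall>m. b m \<ge> 0" and b_pos: "b 0 = 0"
    and b_summable: "summable b" and b_sum: "suminf b = 1"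
    and b_second: "summable (\<lambda>m. (real m)^2 * b m)"
    and init: "i0 \<in> {1,2}"
    and limit: "\<forall>x. \<forall>j\<in>{1,2}. (\<lambda>n. qdist a b x0 i0 n (x, j)) \<longlonglongrightarrow> f x j"
begin

abbreviation "q n \<equiv> qdist a b x0 i0 n"
abbreviation "P i j \<equiv> Pm a i j"
abbreviation "S \<equiv> P 1 2 + P 2 1"
abbreviation "al i \<equiv> alpha_row a i"
abbreviation "EB \<equiv> mom1 b"

lemma an: assumes "i \<in> {1,2}" "j \<in> {1,2}" shows "0 \<le> a i j k"
  using from12[OF a_nonneg assms] by simp
lemma as: assumes "i \<in> {1,2}" "j \<in> {1,2}" shows "summable (a i j)"
  using from12[OF a_summable assms] .
lemma a2: assumes "i \<in> {1,2}" "j \<in> {1,2}" shows "summable (\<lambda>k. real k * (real k - 1) * a i j k)"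
  using from12[OF a_second assms] .
lemma b0: "0 \<le> b m" using b_nonneg by simp

lemma b2: "summable (\<lambda>k. real k * (real k - 1) * b k)"
proof (rule summable_comparison_test'[OF b_second, of 0])
  fix k :: nat
  have h1: "real k * (real k - 1) \<le> (real k)^2" by (simp add: power2_eq_square algebra_simps)
  have h2: "0 \<le> real k * (real k - 1)" by (cases k) auto
  have "real k * (real k - 1) * b k \<le> (real k)^2 * b k" using h1 b0[of k] by (rule mult_right_mono)
  moreover have "0 \<le> real k * (real k - 1) * b k" using h2 b0[of k] by simp
  ultimately show "norm (real k * (real k - 1) * b k) \<le> (real k)^2 * b k" by simp
qed

lemma P12: "P 1 1 = 1 - P 1 2" and P21: "P 2 2 = 1 - P 2 1" using stochastic by auto

lemma S_pos: "S > 0" using irreducible by simp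

lemma pi1: "\<pi> 1 = P 2 1 / S" and pi2: "\<pi> 2 = P 1 2 / S"
proof -
  have "\<pi> 1 = \<pi> 1 * P 1 1 + \<pi> 2 * P 2 1" using stationary(4) by simp
  then have "\<pi> 1 = \<pi> 1 * (1 - P 1 2) + \<pi> 2 * P 2 1" by (simp only: P12)
  then have e: "\<pi> 1 * P 1 2 = \<pi> 2 * P 2 1" by (simp add: algebra_simps)
  have "\<pi> 1 * S = \<pi> 1 * P 1 2 + \<pi> 1 * P 2 1" by (simp add: distrib_left)
  also have "\<dots> = (\<pi> 1 + \<pi> 2) * P 2 1" using e by (simp add: distrib_right)
  finally have "\<pi> 1 * S = P 2 1" using stationary(3) by simp
  then show "\<pi> 1 = P 2 1 / S" using S_pos by (simp add: field_simps)
  then show "\<pi> 2 = P 1 2 / S" using stationary(3) S_pos by (simp add: field_simps)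
qed

lemma rho_eq: "rho a \<pi> = (P 2 1 * al 1 + P 1 2 * al 2) / S"
proof -
  have "rho a \<pi> = P 2 1 / S * al 1 + P 1 2 / S * al 2" unfolding rho_def pi1 pi2 by simp
  also have "\<dots> = (P 2 1 * al 1 + P 1 2 * al 2) / S" by (simp add: add_divide_distrib)
  finally show ?thesis .
qed

definition h1 where "h1 = (al 1 - al 2) / S"

lemma drift_id: "al 1 * T1 + al 2 * T2 = rho a \<pi> + h1 * (T1 - (P 1 1 * T1 + P 2 1 * T2))"
  if "T1 + T2 = 1" for T1 T2
proof -
  have hT: "T2 = 1 - T1" using that by simp
  have k: "S * (al 1 * T1 + al 2 * T2) = (P 2 1 * al 1 + P 1 2 * al 2) + (al 1 - al 2) * (T1 - (P 1 1 * T1 + P 2 1 * T2))"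
    unfolding hT P12 by (simp add: algebra_simps)
  have "al 1 * T1 + al 2 * T2 = (S * (al 1 * T1 + al 2 * T2)) / S" using S_pos by simp
  also have "\<dots> = (P 2 1 * al 1 + P 1 2 * al 2) / S + (al 1 - al 2) / S * (T1 - (P 1 1 * T1 + P 2 1 * T2))"
    unfolding k by (simp add: add_divide_distrib)
  finally show ?thesis unfolding rho_eq h1_def .
qed

lemma q_Suc: "q (Suc n) = qstep a b (q n)" by (simp add: qdist_def)

lemma q_nonneg: "i \<in> {1,2} \<Longrightarrow> 0 \<le> q n (x, i)"
proof (induction n arbitrary: x i)
  case 0 then show ?case by (simp add: qdist_def)
next
  case (Suc n) then show ?case unfolding q_Suc by (intro qstep_nonneg[OF a_nonneg b0]) auto
qed

lemma q_summable: "i \<in> {1,2} \<Longrightarrow> summable (\<lambda>x. q n (x, i))"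
proof (induction n arbitrary: i)
  case 0
  have "summable (\<lambda>x. if x = x0 \<and> i = i0 then (1::real) else 0)"
    by (rule summable_finite[of "{x0}"]) auto
  then show ?case by (simp add: qdist_def)
next
  case (Suc n) then show ?case unfolding q_Suc
    by (intro GF_rel(1)[OF a_nonneg a_summable b0 b_summable b_pos, where z = "0::real"] q_nonneg) auto
qed

definition T where "T n i = suminf (\<lambda>x. q n (x, i))"
definition Q where "Q n i z = G (\<lambda>x. q n (x, i)) (z::real)"

lemma GF_chain: "j \<in> {1,2} \<Longrightarrow> \<bar>z\<bar> \<le> 1 \<Longrightarrow>
   z * Q (Suc n) j z = (\<Sum>i\<in>{1,2}. G (a i j) z * (Q n i z - q n (0, i) * (1 - G b z)))"
proof -
  assume j: "j \<in> {1,2}" and z: "\<bar>z\<bar> \<le> 1"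
  have "z * G (\<lambda>y. qstep a b (q n) (y, j)) z
       = (\<Sum>i\<in>{1,2}. G (a i j) z * (G (\<lambda>x. q n (x, i)) z - of_real (q n (0, i)) * (1 - G b z)))"
    by (rule GF_rel(2)[OF a_nonneg a_summable b0 b_summable b_pos q_nonneg q_summable j]) (use z in auto)
  then show ?thesis by (simp add: Q_def q_Suc)
qed

lemma T_Q1: "T n i = Q n i 1" unfolding T_def Q_def by (simp add: G_one)

lemma T_Suc: "j \<in> {1,2} \<Longrightarrow> T (Suc n) j = T n 1 * P 1 j + T n 2 * P 2 j"
  using GF_chain[of j 1 n] unfolding T_Q1 by (simp add: G_one b_sum Pm_def mult.commute)

lemma T_sum: "T n 1 + T n 2 = 1"
proof (induction n)
  case 0
  have "T 0 i = (if i = i0 then 1 else 0)" for i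
  proof -
    have "(\<lambda>x. q 0 (x, i)) = (\<lambda>x. if x = x0 then (if i = i0 then 1 else 0) else 0)"
      by (auto simp: qdist_def)
    moreover have "(\<Sum>x. if x = x0 then (1::real) else 0) = 1"
      using sums_single[of x0 "\<lambda>_. 1::real"] by (simp add: sums_iff)
    ultimately show ?thesis unfolding T_def by simp
  qed
  then show ?case using init by auto
next
  case (Suc n)
  have "T (Suc n) 1 + T (Suc n) 2 = T n 1 * (P 1 1 + P 1 2) + T n 2 * (P 2 1 + P 2 2)"
    using T_Suc[of 1 n] T_Suc[of 2 n] by (simp add: algebra_simps)
  then show ?case using stochastic Suc by simp
qed

lemma T_nonneg: "i \<in> {1,2} \<Longrightarrow> 0 \<le> T n i"
  unfolding T_def using q_summable q_nonneg by (simp add: suminf_nonneg)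

end


context setting begin

definition ar where "ar i k = a i 1 k + a i 2 k"

lemma ar_nonneg: "i \<in> {1,2} \<Longrightarrow> 0 \<le> ar i k"
  unfolding ar_def using an[of i 1 k] an[of i 2 k] by simp
lemma ar_summable: "i \<in> {1,2} \<Longrightarrow> summable (ar i)"
  unfolding ar_def using as[of i 1] as[of i 2] by (intro summable_add) auto
lemma ar_sum: "i \<in> {1,2} \<Longrightarrow> suminf (ar i) = 1"
  unfolding ar_def using as[of i 1] as[of i 2] stochastic
  by (subst suminf_add[symmetric]) (auto simp: Pm_def)
lemma ar_2: "i \<in> {1,2} \<Longrightarrow> summable (\<lambda>k. real k * (real k - 1) * ar i k)"
  unfolding ar_def using a2[of i 1] a2[of i 2] by (simp add: distrib_left summable_add)
lemma mom1_a: "i \<in> {1,2} \<Longrightarrow> j \<in> {1,2} \<Longrightarrow> summable (\<lambda>k. real k * a i j k)"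
  by (rule mom1_summable[OF an as a2])
lemma ar_mom1: "i \<in> {1,2} \<Longrightarrow> (\<Sum>k. real k * ar i k) = al i"
  unfolding ar_def alpha_row_def alpha_def mom1_def using mom1_a[of i 1] mom1_a[of i 2]
  by (simp add: distrib_left suminf_add)

lemma G_ar: "i \<in> {1,2} \<Longrightarrow> 0 \<le> z \<Longrightarrow> z \<le> 1 \<Longrightarrow> G (ar i) (z::real) = G (a i 1) z + G (a i 2) z"
  unfolding G_real ar_def using pow_summable[OF an as, of i 1 z] pow_summable[OF an as, of i 2 z]
  by (simp add: distrib_right suminf_add)

definition beta where "beta i z = (\<Sum>k. ar i k * sp k z)"
definition gam where "gam z = (\<Sum>k. b k * sp k z)"

lemma beta_id: "i \<in> {1,2} \<Longrightarrow> 0 \<le> z \<Longrightarrow> z < 1 \<Longrightarrow> G (ar i) z = 1 - (1 - z) * beta i z"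
  using SL1[OF ar_nonneg ar_summable, of i z] ar_sum[of i] unfolding beta_def G_real by (simp add: field_simps)

lemma beta_bounds: "i \<in> {1,2} \<Longrightarrow> 0 \<le> z \<Longrightarrow> z < 1 \<Longrightarrow> 0 \<le> beta i z \<and> beta i z \<le> al i"
proof -
  assume i: "i \<in> {1,2}" and z: "0 \<le> z" "z < 1"
  have L: "summable (\<lambda>k. ar i k * rp k z) \<and> summable (\<lambda>k. ar i k * sp k z)
     \<and> (\<Sum>k. ar i k * sp k z) = (\<Sum>k. real k * ar i k) - (1-z) * (\<Sum>k. ar i k * rp k z)"
    by (rule SL2[OF ar_nonneg ar_summable ar_2]) (use i z in auto)
  have "0 \<le> (\<Sum>k. ar i k * rp k z)"
    using L ar_nonneg[OF i] rp_nonneg[OF z(1)] by (intro suminf_nonneg) auto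
  then have "beta i z \<le> al i" using L ar_mom1[OF i] z unfolding beta_def by simp
  moreover have "0 \<le> beta i z"
    unfolding beta_def using L ar_nonneg[OF i] sp_nonneg[OF z(1)] by (intro suminf_nonneg) auto
  ultimately show ?thesis by simp
qed

lemma bmom1: "summable (\<lambda>k. real k * b k)"
  by (rule mom1_summable[OF b0 b_summable b2])

lemma gam_id: "0 \<le> z \<Longrightarrow> z < 1 \<Longrightarrow> G b z = 1 - (1 - z) * gam z"
  using SL1[OF b0 b_summable, of z] b_sum unfolding gam_def G_real by (simp add: field_simps)

lemma gam_bounds: "0 \<le> z \<Longrightarrow> z < 1 \<Longrightarrow> 0 \<le> gam z \<and> gam z \<le> EB"
proof -
  assume z: "0 \<le> z" "z < 1"
  have L: "summable (\<lambda>k. b k * rp k z) \<and> summable (\<lambda>k. b k * sp k z)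
     \<and> (\<Sum>k. b k * sp k z) = (\<Sum>k. real k * b k) - (1-z) * (\<Sum>k. b k * rp k z)"
    by (rule SL2[OF b0 b_summable b2]) (use z in auto)
  have "0 \<le> (\<Sum>k. b k * rp k z)"
    using L b0 rp_nonneg[OF z(1)] by (intro suminf_nonneg) auto
  then have "gam z \<le> EB" using L z unfolding gam_def mom1_def by simp
  moreover have "0 \<le> gam z"
    unfolding gam_def using L b0 sp_nonneg[OF z(1)] by (intro suminf_nonneg) auto
  ultimately show ?thesis by simp
qed

lemma Q_le_T: "i \<in> {1,2} \<Longrightarrow> 0 \<le> z \<Longrightarrow> z \<le> 1 \<Longrightarrow> 0 \<le> Q n i z \<and> Q n i z \<le> T n i"
proof -
  assume i: "i \<in> {1,2}" and z: "0 \<le> z" "z \<le> 1"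
  have s: "summable (\<lambda>x. q n (x, i) * z^x)" by (rule pow_summable[OF q_nonneg q_summable]) (use i z in auto)
  have "Q n i z \<le> T n i" unfolding Q_def T_def G_real
    using s q_summable[OF i] q_nonneg[OF i] z by (intro suminf_le) (auto intro!: mult_left_le power_le_one)
  moreover have "0 \<le> Q n i z" unfolding Q_def G_real
    using s q_nonneg[OF i] z by (intro suminf_nonneg) auto
  ultimately show ?thesis by simp
qed

definition pp where "pp n = q n (0, 1) + q n (0, 2)"
definition Eh where "Eh n z = ((T n 1 - Q n 1 z) + (T n 2 - Q n 2 z)) / (1 - z)"

lemma Eh_nonneg: "0 \<le> z \<Longrightarrow> z < 1 \<Longrightarrow> 0 \<le> Eh n z"
  unfolding Eh_def using Q_le_T[of 1 z n] Q_le_T[of 2 z n] by simp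

lemma key_identity:
  fixes z u S' E E' Q1 Q2 p1 p2 b1 b2 g :: real
  assumes u: "u = 1 - z" "u \<noteq> 0"
    and F1: "z * S' = (1 - u*b1)*(Q1 - u*g*p1) + (1 - u*b2)*(Q2 - u*g*p2)"
    and F2: "E' * u = 1 - S'" and F3: "E * u = 1 - Q1 - Q2"
  shows "z * E' = E - 1 + g*(p1+p2) + b1*Q1 + b2*Q2 - u*g*(b1*p1+b2*p2)"
proof -
  have "u * (z * E') = z * (E' * u)" by (simp add: mult_ac)
  also have "\<dots> = z - z * S'" unfolding F2 by (simp add: algebra_simps)
  also have "\<dots> = (1 - u) - ((1 - u*b1)*(Q1 - u*g*p1) + (1 - u*b2)*(Q2 - u*g*p2))" using F1 u by simp
  also have "\<dots> = (1 - Q1 - Q2) + u * (- 1 + g*(p1+p2) + b1*Q1 + b2*Q2 - u*g*(b1*p1+b2*p2))"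
    by (simp add: algebra_simps)
  also have "\<dots> = u * (E - 1 + g*(p1+p2) + b1*Q1 + b2*Q2 - u*g*(b1*p1+b2*p2))"
    unfolding F3[symmetric] by (simp add: algebra_simps)
  finally show ?thesis using u(2) by simp
qed

definition dd where "dd n = rho a \<pi> - 1 + EB * pp n + h1 * (T n 1 - T (Suc n) 1)"

lemma chain_step: "0 < z \<Longrightarrow> z < 1 \<Longrightarrow> z * Eh (Suc n) z \<le> Eh n z + dd n"
proof -
  assume z: "0 < z" "z < 1"
  define u where "u = 1 - z"
  have u0: "u \<noteq> 0" "0 < u" using z u_def by auto
  have A: "G (a i 1) z + G (a i 2) z = 1 - u * beta i z" if i: "i \<in> {1,2}" for i
    using G_ar[OF i, of z] beta_id[OF i, of z] z u_def by simp
  have A1: "G (a 1 1) z + G (a 1 2) z = 1 - u * beta 1 z" by (rule A) simp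
  have A2: "G (a 2 1) z + G (a 2 2) z = 1 - u * beta 2 z" by (rule A) simp
  have B: "1 - G b z = u * gam z" using gam_id[of z] z u_def by simp
  have g1: "z * Q (Suc n) 1 z = (\<Sum>i\<in>{1,2}. G (a i 1) z * (Q n i z - q n (0, i) * (1 - G b z)))"
    by (rule GF_chain) (use z in auto)
  have g2: "z * Q (Suc n) 2 z = (\<Sum>i\<in>{1,2}. G (a i 2) z * (Q n i z - q n (0, i) * (1 - G b z)))"
    by (rule GF_chain) (use z in auto)
  have F1: "z * (Q (Suc n) 1 z + Q (Suc n) 2 z) =
      (1 - u*beta 1 z)*(Q n 1 z - u*gam z*q n (0,1)) + (1 - u*beta 2 z)*(Q n 2 z - u*gam z*q n (0,2))"
  proof -
    have "z * (Q (Suc n) 1 z + Q (Suc n) 2 z) =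
       (G (a 1 1) z + G (a 1 2) z) * (Q n 1 z - q n (0, 1) * (1 - G b z)) +
       (G (a 2 1) z + G (a 2 2) z) * (Q n 2 z - q n (0, 2) * (1 - G b z))"
      using g1 g2 by (simp add: algebra_simps)
    also have "\<dots> = (1 - u*beta 1 z) * (Q n 1 z - q n (0, 1) * (u * gam z)) +
       (1 - u*beta 2 z) * (Q n 2 z - q n (0, 2) * (u * gam z))"
      by (simp only: A1 A2 B)
    finally show ?thesis by (simp add: mult_ac)
  qed
  have F2: "Eh (Suc n) z * u = 1 - (Q (Suc n) 1 z + Q (Suc n) 2 z)"
    unfolding Eh_def u_def using T_sum[of "Suc n"] z by (simp add: field_simps)
  have F3: "Eh n z * u = 1 - Q n 1 z - Q n 2 z"
    unfolding Eh_def u_def using T_sum[of n] z by (simp add: field_simps)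
  have KI: "z * Eh (Suc n) z = Eh n z - 1 + gam z * pp n + beta 1 z * Q n 1 z + beta 2 z * Q n 2 z
      - u * gam z * (beta 1 z * q n (0,1) + beta 2 z * q n (0,2))"
    unfolding pp_def by (rule key_identity[OF u_def u0(1) F1 F2 F3])
  have bb1: "0 \<le> beta 1 z" "beta 1 z \<le> al 1" using beta_bounds[of 1 z] z by auto
  have bb2: "0 \<le> beta 2 z" "beta 2 z \<le> al 2" using beta_bounds[of 2 z] z by auto
  have gg: "0 \<le> gam z" "gam z \<le> EB" using gam_bounds[of z] z by auto
  have qq: "0 \<le> q n (0,1)" "0 \<le> q n (0,2)" using q_nonneg by auto
  have QT1: "0 \<le> Q n 1 z" "Q n 1 z \<le> T n 1" using Q_le_T[of 1 z n] z by auto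
  have QT2: "0 \<le> Q n 2 z" "Q n 2 z \<le> T n 2" using Q_le_T[of 2 z n] z by auto
  have "0 \<le> u * gam z * (beta 1 z * q n (0,1) + beta 2 z * q n (0,2))"
    using u0 gg bb1 bb2 qq by simp
  moreover have "gam z * pp n \<le> EB * pp n" unfolding pp_def using gg qq by (intro mult_right_mono) auto
  moreover have "beta 1 z * Q n 1 z \<le> al 1 * T n 1" using bb1 QT1 by (intro mult_mono) auto
  moreover have "beta 2 z * Q n 2 z \<le> al 2 * T n 2" using bb2 QT2 by (intro mult_mono) auto
  ultimately have "z * Eh (Suc n) z \<le> Eh n z - 1 + EB * pp n + (al 1 * T n 1 + al 2 * T n 2)"
    unfolding KI by linarith
  also have "al 1 * T n 1 + al 2 * T n 2 = rho a \<pi> + h1 * (T n 1 - T (Suc n) 1)"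
    using drift_id[OF T_sum[of n]] T_Suc[of 1 n] by simp
  finally show ?thesis unfolding dd_def by simp
qed

end


context setting begin

lemma EB_ge1: "1 \<le> EB"
proof -
  have "suminf b \<le> (\<Sum>k. real k * b k)"
  proof (rule suminf_le[OF _ b_summable bmom1])
    fix k show "b k \<le> real k * b k"
    proof (cases k)
      case 0 then show ?thesis using b_pos by simp
    next
      case (Suc m)
      have "b k \<le> b k + real m * b k" using b0[of k] by simp
      then show ?thesis using Suc by (simp add: algebra_simps)
    qed
  qed
  then show ?thesis using b_sum unfolding mom1_def by simp
qed

lemma T0: "T 0 i = (if i = i0 then 1 else 0)"
proof -
  have "(\<lambda>x. q 0 (x, i)) = (\<lambda>x. if x = x0 then (if i = i0 then 1 else 0) else 0)"
    by (auto simp: qdist_def)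
  moreover have "(\<Sum>x. if x = x0 then (1::real) else 0) = 1"
    using sums_single[of x0 "\<lambda>_. 1::real"] by (simp add: sums_iff)
  ultimately show ?thesis unfolding T_def by simp
qed

lemma Q0: "Q 0 i z = (if i = i0 then z^x0 else 0)"
proof -
  have "(\<lambda>x. q 0 (x, i) * z^x) = (\<lambda>x. if x = x0 then (if i = i0 then z^x else 0) else 0)"
    by (auto simp: qdist_def)
  moreover have "(\<lambda>x. if x = x0 then (if i = i0 then z^x else 0) else 0) sums (if i = i0 then z^x0 else 0)"
    using sums_single[of x0 "\<lambda>x. if i = i0 then z^x else 0"] by simp
  ultimately show ?thesis unfolding Q_def G_real by (simp add: sums_iff)
qed

lemma Eh0: "z < 1 \<Longrightarrow> Eh 0 z = sp x0 z"
proof -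
  assume z: "z < 1"
  have "(T 0 1 - Q 0 1 z) + (T 0 2 - Q 0 2 z) = 1 - z^x0"
    using init by (auto simp: T0 Q0)
  then show ?thesis unfolding Eh_def using sp_id[of z x0] z by simp
qed

lemma tele: "0 < z \<Longrightarrow> z < 1 \<Longrightarrow> z^N * Eh N z \<le> Eh 0 z + (\<Sum>n<N. z^n * dd n)"
proof (induction N)
  case 0 then show ?case by simp
next
  case (Suc N)
  have "z^(Suc N) * Eh (Suc N) z = z^N * (z * Eh (Suc N) z)" by (simp add: mult_ac)
  also have "\<dots> \<le> z^N * (Eh N z + dd N)"
    using chain_step[of z N] Suc.prems by (intro mult_left_mono) auto
  also have "\<dots> = z^N * Eh N z + z^N * dd N" by (simp add: algebra_simps)
  also have "\<dots> \<le> Eh 0 z + (\<Sum>n<N. z^n * dd n) + z^N * dd N" using Suc by simp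
  finally show ?case by simp
qed

lemma lb0: "0 \<le> real x0 + (\<Sum>n<N. dd n)"
proof (rule tendsto_lowerbound[OF _ _ trivial_limit_at_left_real])
  show "((\<lambda>z. real x0 + (\<Sum>n<N. z^n * dd n)) \<longlongrightarrow> real x0 + (\<Sum>n<N. dd n)) (at_left (1::real))"
  proof -
    have "((\<lambda>z. real x0 + (\<Sum>n<N. z^n * dd n)) \<longlongrightarrow> real x0 + (\<Sum>n<N. 1^n * dd n)) (at_left (1::real))"
      by (intro tendsto_intros)
    then show ?thesis by simp
  qed
  show "\<forall>\<^sub>F z in at_left 1. 0 \<le> real x0 + (\<Sum>n<N. z^n * dd n)"
    using ev_left1 proof eventually_elim
    case (elim z)
    have "0 \<le> z^N * Eh N z" using elim Eh_nonneg[of z N] by simp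
    also have "\<dots> \<le> Eh 0 z + (\<Sum>n<N. z^n * dd n)" using tele elim by auto
    also have "Eh 0 z \<le> real x0" using Eh0[of z] sp_le[of z x0] elim by simp
    finally show ?case by simp
  qed
qed

lemma T1_bounds: "0 \<le> T n 1 \<and> T n 1 \<le> 1"
  using T_sum[of n] T_nonneg[of 1 n] T_nonneg[of 2 n] by auto

lemma sum_dd: "(\<Sum>n<N. dd n) = real N * (rho a \<pi> - 1) + EB * (\<Sum>n<N. pp n) + h1 * (T 0 1 - T N 1)"
proof -
  have "(\<Sum>n<N. dd n) = (\<Sum>n<N. rho a \<pi> - 1) + EB * (\<Sum>n<N. pp n) + h1 * (\<Sum>n<N. T n 1 - T (Suc n) 1)"
    unfolding dd_def by (simp add: sum.distrib sum_distrib_left)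
  also have "(\<Sum>n<N. T n 1 - T (Suc n) 1) = T 0 1 - T N 1" by (rule sum_lessThan_telescope')
  finally show ?thesis by simp
qed

lemma lb1: "real N * (1 - rho a \<pi>) - real x0 - \<bar>h1\<bar> \<le> EB * (\<Sum>n<N. pp n)"
proof -
  have "\<bar>h1 * (T 0 1 - T N 1)\<bar> \<le> \<bar>h1\<bar> * 1"
    unfolding abs_mult using T1_bounds[of 0] T1_bounds[of N] by (intro mult_left_mono) auto
  then have "h1 * (T 0 1 - T N 1) \<le> \<bar>h1\<bar>" by simp
  then show ?thesis using lb0[of N] unfolding sum_dd by (simp add: algebra_simps)
qed

lemma pp_bounds: "0 \<le> pp n \<and> pp n \<le> 1"
proof -
  have "q n (0, i) \<le> T n i" if i: "i \<in> {1,2}" for i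
  proof -
    have "(\<Sum>x\<in>{0}. q n (x, i)) \<le> suminf (\<lambda>x. q n (x, i))"
      using q_summable[OF i] q_nonneg[OF i] by (intro sum_le_suminf) auto
    then show ?thesis unfolding T_def by simp
  qed
  then have "q n (0, 1) \<le> T n 1" "q n (0, 2) \<le> T n 2" by auto
  moreover have "0 \<le> q n (0, 1)" "0 \<le> q n (0, 2)" using q_nonneg by auto
  ultimately show ?thesis unfolding pp_def using T_sum[of n] by linarith
qed

lemma pf_lb: "1 - rho a \<pi> \<le> EB * (f 0 1 + f 0 2)"
proof (rule ccontr)
  define pf where "pf = f 0 1 + f 0 2"
  assume "\<not> 1 - rho a \<pi> \<le> EB * (f 0 1 + f 0 2)"
  then have lt: "EB * pf < 1 - rho a \<pi>" unfolding pf_def by simp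
  define eps where "eps = (1 - rho a \<pi> - EB * pf) / 2"
  have eps: "eps > 0" using lt eps_def by simp
  have lim: "(\<lambda>n. pp n) \<longlonglongrightarrow> pf"
    unfolding pp_def pf_def using limit by (intro tendsto_add) auto
  have pf0: "0 \<le> pf" using lim pp_bounds by (intro LIMSEQ_le_const) auto
  have "eventually (\<lambda>n. EB * pp n < EB * pf + eps) sequentially"
    using order_tendstoD(2)[OF tendsto_mult[OF tendsto_const[of EB] lim], of "EB * pf + eps"] eps by simp
  then obtain n0 where n0: "\<And>n. n \<ge> n0 \<Longrightarrow> EB * pp n < EB * pf + eps"
    unfolding eventually_sequentially by auto
  have up: "EB * (\<Sum>n<n0 + M. pp n) \<le> real n0 * EB + real M * (EB * pf + eps)" for M
  proof (induction M)
    case 0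
    have "EB * (\<Sum>n<n0. pp n) \<le> EB * (\<Sum>n<n0. 1)"
      using pp_bounds EB_ge1 by (intro mult_left_mono sum_mono) auto
    then show ?case by (simp add: mult.commute)
  next
    case (Suc M)
    have "EB * (\<Sum>n<n0 + Suc M. pp n) = EB * (\<Sum>n<n0 + M. pp n) + EB * pp (n0 + M)"
      by (simp add: distrib_left)
    also have "\<dots> \<le> real n0 * EB + real M * (EB * pf + eps) + (EB * pf + eps)"
      using Suc n0[of "n0 + M"] by simp
    finally show ?case by (simp add: algebra_simps)
  qed
  obtain M :: nat where M: "real M > (real x0 + \<bar>h1\<bar> + real n0 * EB) / eps"
    using reals_Archimedean2 by blast
  have h_a: "real (n0 + M) * (1 - rho a \<pi>) - real x0 - \<bar>h1\<bar> \<le> real n0 * EB + real M * (EB * pf + eps)"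
    using lb1[of "n0 + M"] up[of M] by linarith
  have h_b: "EB * pf + eps = 1 - rho a \<pi> - eps" unfolding eps_def by (simp add: field_simps)
  have ineq: "real (n0 + M) * (1 - rho a \<pi>) - real x0 - \<bar>h1\<bar> \<le> real n0 * EB + real M * (1 - rho a \<pi> - eps)"
    using h_a unfolding h_b .
  have d1: "real (n0 + M) * (1 - rho a \<pi>) = real n0 * (1 - rho a \<pi>) + real M * (1 - rho a \<pi>)"
    by (simp add: algebra_simps)
  have d2: "real M * (1 - rho a \<pi> - eps) = real M * (1 - rho a \<pi>) - real M * eps"
    by (simp add: algebra_simps)
  have "real M * eps \<le> real x0 + \<bar>h1\<bar> + real n0 * EB - real n0 * (1 - rho a \<pi>)"
  proof -
    have "real n0 * (1 - rho a \<pi>) + real M * (1 - rho a \<pi>) - real x0 - \<bar>h1\<bar>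
        \<le> real n0 * EB + (real M * (1 - rho a \<pi>) - real M * eps)"
      using ineq unfolding d1 d2 .
    then show ?thesis by linarith
  qed
  also have "\<dots> \<le> real x0 + \<bar>h1\<bar> + real n0 * EB"
  proof -
    have "0 \<le> real n0 * (1 - rho a \<pi>)" using rho_lt1 by simp
    then show ?thesis by linarith
  qed
  finally have "real M \<le> (real x0 + \<bar>h1\<bar> + real n0 * EB) / eps" using eps by (simp add: field_simps)
  then show False using M by simp
qed

end


context setting begin

definition betae where "betae i j z = (\<Sum>k. a i j k * sp k z)"
definition dele where "dele i j z = (\<Sum>k. a i j k * rp k z)"
definition eta where "eta z = (\<Sum>k. b k * rp k z)"

lemma Ga_id: "i \<in> {1,2} \<Longrightarrow> j \<in> {1,2} \<Longrightarrow> 0 \<le> z \<Longrightarrow> z < 1 \<Longrightarrow> G (a i j) z = P i j - (1 - z) * betae i j z"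
proof -
  assume ij: "i \<in> {1,2}" "j \<in> {1,2}" and z: "0 \<le> z" "z < 1"
  have "summable (\<lambda>k. a i j k * sp k z) \<and> (\<Sum>k. a i j k * sp k z) = (suminf (a i j) - (\<Sum>k. a i j k * z^k)) / (1-z)"
    by (rule SL1[OF an as]) (use ij z in auto)
  then show ?thesis unfolding betae_def G_real Pm_def using z by (simp add: field_simps)
qed

lemma betae_id: "i \<in> {1,2} \<Longrightarrow> j \<in> {1,2} \<Longrightarrow> 0 \<le> z \<Longrightarrow> z \<le> 1 \<Longrightarrow> betae i j z = alpha a i j - (1 - z) * dele i j z"
proof -
  assume ij: "i \<in> {1,2}" "j \<in> {1,2}" and z: "0 \<le> z" "z \<le> 1"
  have "summable (\<lambda>k. a i j k * rp k z) \<and> summable (\<lambda>k. a i j k * sp k z)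
     \<and> (\<Sum>k. a i j k * sp k z) = (\<Sum>k. real k * a i j k) - (1-z) * (\<Sum>k. a i j k * rp k z)"
    by (rule SL2[OF an as a2]) (use ij z in auto)
  then show ?thesis unfolding betae_def dele_def alpha_def mom1_def by simp
qed

lemma gam_id2: "0 \<le> z \<Longrightarrow> z \<le> 1 \<Longrightarrow> gam z = EB - (1 - z) * eta z"
proof -
  assume z: "0 \<le> z" "z \<le> 1"
  have "summable (\<lambda>k. b k * rp k z) \<and> summable (\<lambda>k. b k * sp k z)
     \<and> (\<Sum>k. b k * sp k z) = (\<Sum>k. real k * b k) - (1-z) * (\<Sum>k. b k * rp k z)"
    by (rule SL2[OF b0 b_summable b2]) (use z in auto)
  then show ?thesis unfolding gam_def eta_def mom1_def by simp
qed

lemma dele_cont: "i \<in> {1,2} \<Longrightarrow> j \<in> {1,2} \<Longrightarrow> continuous_on {0..1} (dele i j)"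
  unfolding dele_def[abs_def] by (rule SL3[OF an a2])

lemma eta_cont: "continuous_on {0..1} eta"
  unfolding eta_def[abs_def] by (rule SL3[OF b0 b2])

lemma rp1_sum: "summable (\<lambda>k. real k * (real k - 1) * c k) \<Longrightarrow> (\<Sum>k. c k * rp k 1) = fmom2 c / 2"
proof -
  assume sc: "summable (\<lambda>k. real k * (real k - 1) * c k)"
  have "(\<lambda>k. c k * rp k 1) = (\<lambda>k. real k * (real k - 1) * c k / 2)"
    by (auto simp: rp_one)
  then show ?thesis unfolding fmom2_def using suminf_divide[OF sc, of 2] by simp
qed

lemma dele_lim: "i \<in> {1,2} \<Longrightarrow> j \<in> {1,2} \<Longrightarrow> (dele i j \<longlongrightarrow> fmom2 (a i j) / 2) (at_left 1)"
  using tendsto_left1[OF dele_cont] rp1_sum[OF a2] unfolding dele_def by simp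

lemma eta_lim: "(eta \<longlongrightarrow> fmom2 b / 2) (at_left 1)"
  using tendsto_left1[OF eta_cont] rp1_sum[OF b2] unfolding eta_def by simp

lemma betae_lim: "i \<in> {1,2} \<Longrightarrow> j \<in> {1,2} \<Longrightarrow> (betae i j \<longlongrightarrow> alpha a i j) (at_left 1)"
proof -
  assume ij: "i \<in> {1,2}" "j \<in> {1,2}"
  have "((\<lambda>z. alpha a i j - (1 - z) * dele i j z) \<longlongrightarrow> alpha a i j - (1 - 1) * (fmom2 (a i j) / 2)) (at_left 1)"
    by (intro tendsto_intros dele_lim ij)
  then have "((\<lambda>z. alpha a i j - (1 - z) * dele i j z) \<longlongrightarrow> alpha a i j) (at_left 1)" by simp
  moreover have "eventually (\<lambda>z. alpha a i j - (1 - z) * dele i j z = betae i j z) (at_left 1)"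
    using ev_left1 by eventually_elim (use betae_id ij in auto)
  ultimately show ?thesis by (rule Lim_transform_eventually)
qed

lemma gam_lim: "(gam \<longlongrightarrow> EB) (at_left 1)"
proof -
  have "((\<lambda>z. EB - (1 - z) * eta z) \<longlongrightarrow> EB - (1 - 1) * (fmom2 b / 2)) (at_left 1)"
    by (intro tendsto_intros eta_lim)
  then have "((\<lambda>z. EB - (1 - z) * eta z) \<longlongrightarrow> EB) (at_left 1)" by simp
  moreover have "eventually (\<lambda>z. EB - (1 - z) * eta z = gam z) (at_left 1)"
    using ev_left1 by eventually_elim (use gam_id2 in auto)
  ultimately show ?thesis by (rule Lim_transform_eventually)
qed

lemma qlim: "i \<in> {1,2} \<Longrightarrow> (\<lambda>n. q n (x, i)) \<longlonglongrightarrow> f x i"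
  using limit by blast

lemma f_nonneg: "i \<in> {1,2} \<Longrightarrow> 0 \<le> f x i"
  by (rule LIMSEQ_le_const[OF qlim]) (use q_nonneg in auto)

lemma f_partial: "(\<Sum>x<N. f x 1 + f x 2) \<le> 1"
proof (rule LIMSEQ_le_const2)
  show "(\<lambda>n. \<Sum>x<N. q n (x, 1) + q n (x, 2)) \<longlonglongrightarrow> (\<Sum>x<N. f x 1 + f x 2)"
    by (intro tendsto_sum tendsto_add qlim) auto
  show "\<exists>N0. \<forall>n\<ge>N0. (\<Sum>x<N. q n (x, 1) + q n (x, 2)) \<le> 1"
  proof (intro exI allI impI)
    fix n :: nat
    have "(\<Sum>x<N. q n (x, i)) \<le> T n i" if i: "i \<in> {1,2}" for i
      unfolding T_def using q_summable[OF i] q_nonneg[OF i] by (intro sum_le_suminf) auto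
    then have "(\<Sum>x<N. q n (x, 1)) + (\<Sum>x<N. q n (x, 2)) \<le> T n 1 + T n 2" by (intro add_mono) auto
    then show "(\<Sum>x<N. q n (x, 1) + q n (x, 2)) \<le> 1" using T_sum[of n] by (simp add: sum.distrib)
  qed
qed

lemma f_summable: "i \<in> {1,2} \<Longrightarrow> summable (\<lambda>x. f x i)"
proof (rule summableI_nonneg_bounded[of _ 1])
  assume i: "i \<in> {1,2}"
  show "0 \<le> f x i" for x using f_nonneg[OF i] .
  show "(\<Sum>x<N. f x i) \<le> 1" for N
  proof -
    have "(\<Sum>x<N. f x i) \<le> (\<Sum>x<N. f x 1 + f x 2)"
      using i f_nonneg[of 1] f_nonneg[of 2] by (intro sum_mono) auto
    then show ?thesis using f_partial[of N] by simp
  qed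
qed

definition fq where "fq = (\<lambda>(x, i). f x i)"

lemma fq_stat: "j \<in> {1,2} \<Longrightarrow> qstep a b fq (y, j) = f y j"
proof -
  assume j: "j \<in> {1,2}"
  have l1: "(\<lambda>n. q (Suc n) (y, j)) \<longlonglongrightarrow> f y j"
    using qlim[OF j] by (rule LIMSEQ_Suc)
  have "(\<lambda>n. qstep a b (q n) (y, j)) \<longlonglongrightarrow> qstep a b fq (y, j)"
    unfolding qstep_def fq_def prod.case
    by (intro tendsto_sum tendsto_add tendsto_mult tendsto_const qlim) auto
  then have "(\<lambda>n. q (Suc n) (y, j)) \<longlonglongrightarrow> qstep a b fq (y, j)" by (simp add: q_Suc)
  then show ?thesis using l1 by (rule LIMSEQ_unique)
qed

definition F where "F i z = G (\<lambda>x. f x i) (z::real)"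
definition tt where "tt i = suminf (\<lambda>x. f x i)"
definition cc where "cc = tt 1 + tt 2"
definition pf where "pf = f 0 1 + f 0 2"

lemma GF_stat: "j \<in> {1,2} \<Longrightarrow> \<bar>z\<bar> \<le> 1 \<Longrightarrow>
   z * F j z = (\<Sum>i\<in>{1,2}. G (a i j) z * (F i z - f 0 i * (1 - G b z)))"
proof -
  assume j: "j \<in> {1,2}" and z: "\<bar>z\<bar> \<le> 1"
  have fq0: "\<And>x i. i \<in> {1,2} \<Longrightarrow> 0 \<le> fq (x, i)" unfolding fq_def using f_nonneg by simp
  have fqs: "\<And>i. i \<in> {1,2} \<Longrightarrow> summable (\<lambda>x. fq (x, i))" unfolding fq_def using f_summable by simp
  have "z * G (\<lambda>y. qstep a b fq (y, j)) z
       = (\<Sum>i\<in>{1,2}. G (a i j) z * (G (\<lambda>x. fq (x, i)) z - of_real (fq (0, i)) * (1 - G b z)))"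
    by (rule GF_rel(2)[OF a_nonneg a_summable b0 b_summable b_pos fq0 fqs j]) (use z in auto)
  moreover have "(\<lambda>y. qstep a b fq (y, j)) = (\<lambda>y. f y j)" using fq_stat[OF j] by auto
  ultimately show ?thesis unfolding F_def fq_def by simp
qed

lemma tt_F1: "tt i = F i 1" unfolding tt_def F_def by (simp add: G_one)

lemma tt_stat: "j \<in> {1,2} \<Longrightarrow> tt j = tt 1 * P 1 j + tt 2 * P 2 j"
  using GF_stat[of j 1] unfolding tt_F1[symmetric] by (simp add: G_one b_sum Pm_def mult.commute)

lemma tt_nonneg: "i \<in> {1,2} \<Longrightarrow> 0 \<le> tt i"
  unfolding tt_def using f_summable f_nonneg by (simp add: suminf_nonneg)

lemma cc_le1: "cc \<le> 1"
proof -
  have "(\<lambda>x. f x 1 + f x 2) sums (tt 1 + tt 2)"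
    unfolding tt_def using f_summable by (intro sums_add summable_sums) auto
  then have "cc = (\<Sum>x. f x 1 + f x 2)" unfolding cc_def by (simp add: sums_iff)
  also have "\<dots> \<le> 1" using f_partial f_summable by (intro suminf_le_const summable_add) auto
  finally show ?thesis .
qed

lemma tt_pi: "tt 1 = cc * \<pi> 1" "tt 2 = cc * \<pi> 2"
proof -
  have "tt 1 = tt 1 * P 1 1 + tt 2 * P 2 1" using tt_stat[of 1] by simp
  then have "tt 1 = tt 1 * (1 - P 1 2) + tt 2 * P 2 1" by (simp only: P12)
  then have e: "tt 1 * P 1 2 = tt 2 * P 2 1" by (simp add: algebra_simps)
  have "tt 1 * S = tt 1 * P 1 2 + tt 1 * P 2 1" by (simp add: distrib_left)
  also have "\<dots> = cc * P 2 1" unfolding e cc_def by (simp add: distrib_right)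
  finally have "tt 1 * S = cc * P 2 1" .
  then show t1: "tt 1 = cc * \<pi> 1" unfolding pi1 using S_pos by (simp add: field_simps)
  have "tt 2 = cc - tt 1" unfolding cc_def by simp
  also have "\<dots> = cc * (1 - \<pi> 1)" unfolding t1 by (simp add: algebra_simps)
  also have "1 - \<pi> 1 = \<pi> 2" using stationary(3) by simp
  finally show "tt 2 = cc * \<pi> 2" .
qed

end


lemma sum_alg:
  fixes u F1 F2 P11 P12 P21 P22 b11 b12 b21 b22 g p1 p2 c :: real
  assumes u: "u \<noteq> 0"
    and E1: "(1 - u) * F1 = (P11 - u*b11)*(F1 - p1*(u*g)) + (P21 - u*b21)*(F2 - p2*(u*g))"
    and E2: "(1 - u) * F2 = (P12 - u*b12)*(F1 - p1*(u*g)) + (P22 - u*b22)*(F2 - p2*(u*g))"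
    and R1: "P11 + P12 = 1" and R2: "P21 + P22 = 1"
  shows "c - g*(p1+p2) - (b11+b12)*F1 - (b21+b22)*F2 = (c - F1 - F2) - u*g*((b11+b12)*p1 + (b21+b22)*p2)"
proof -
  have "u * (c - g*(p1+p2) - (b11+b12)*F1 - (b21+b22)*F2) = u * ((c - F1 - F2) - u*g*((b11+b12)*p1 + (b21+b22)*p2))"
    using E1 E2 R1 R2 by algebra
  then show ?thesis using u by simp
qed

lemma eq1_alg:
  fixes u t1 t2 e1 e2 P11 P21 b11 b21 g p1 p2 :: real
  assumes u: "u \<noteq> 0"
    and H: "t1 = t1*P11 + t2*P21"
    and E1: "(1 - u) * (t1 - u*e1) = (P11 - u*b11)*((t1 - u*e1) - p1*(u*g)) + (P21 - u*b21)*((t2 - u*e2) - p2*(u*g))"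
  shows "((1 - P11) - u + u*b11) * e1 + (- P21 + u*b21) * e2
       = - t1 + b11*t1 + b21*t2 + g*(P11*p1 + P21*p2) - u*g*(b11*p1 + b21*p2)"
proof -
  have "u * (((1 - P11) - u + u*b11) * e1 + (- P21 + u*b21) * e2)
       = u * (- t1 + b11*t1 + b21*t2 + g*(P11*p1 + P21*p2) - u*g*(b11*p1 + b21*p2))"
    using H E1 by algebra
  then show ?thesis using u by simp
qed

lemma eq2_alg:
  fixes u t1 t2 e1 e2 c p a1 a2 d1 d2 EB eta g b1 b2 p1 p2 :: real
  assumes u: "u \<noteq> 0"
    and H: "c - EB*p - (a1*t1 + a2*t2) = 0"
    and c: "c = t1 + t2" and p: "p = p1 + p2"
    and b1: "b1 = a1 - u*d1" and b2: "b2 = a2 - u*d2" and g: "g = EB - u*eta"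
    and S: "c - g*p - b1*(t1 - u*e1) - b2*(t2 - u*e2) = (c - (t1 - u*e1) - (t2 - u*e2)) - u*g*(b1*p1 + b2*p2)"
  shows "(1 - b1) * e1 + (1 - b2) * e2 = eta*p + d1*t1 + d2*t2 + g*(b1*p1 + b2*p2)"
proof -
  have "u * ((1 - b1) * e1 + (1 - b2) * e2) = u * (eta*p + d1*t1 + d2*t2 + g*(b1*p1 + b2*p2))"
    using H c p b1 b2 g S by algebra
  then show ?thesis using u by simp
qed

lemma solve2:
  fixes m11 m12 m21 m22 e1 e2 R1 R2 :: real
  assumes "m11*e1 + m12*e2 = R1" "m21*e1 + m22*e2 = R2" "m11*m22 - m12*m21 \<noteq> 0"
  shows "e1 + e2 = (R1*(m22 - m21) + R2*(m11 - m12)) / (m11*m22 - m12*m21)"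
proof -
  have "(e1 + e2) * (m11*m22 - m12*m21) = R1*(m22 - m21) + R2*(m11 - m12)"
    unfolding assms(1,2)[symmetric] by (simp add: algebra_simps)
  then show ?thesis using assms(3) by (simp add: field_simps)
qed



context setting begin

definition ee where "ee i z = (tt i - F i z) / (1 - z)"
definition bb where "bb i z = betae i 1 z + betae i 2 z"
definition dd2 where "dd2 i z = dele i 1 z + dele i 2 z"

lemma F_lim: "i \<in> {1,2} \<Longrightarrow> (F i \<longlongrightarrow> tt i) (at_left 1)"
proof -
  assume i: "i \<in> {1,2}"
  have "continuous_on {0..1} (F i)" unfolding F_def G_real
    by (rule pow_cont[OF f_nonneg f_summable]) (use i in auto)
  from tendsto_left1[OF this] show ?thesis unfolding tt_F1 .
qed

lemma bb_lim: "i \<in> {1,2} \<Longrightarrow> (bb i \<longlongrightarrow> al i) (at_left 1)"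
  unfolding bb_def[abs_def] alpha_row_def by (intro tendsto_add betae_lim) auto

lemma dd2_lim: "i \<in> {1,2} \<Longrightarrow> (dd2 i \<longlongrightarrow> fmom2 (a i 1) / 2 + fmom2 (a i 2) / 2) (at_left 1)"
  unfolding dd2_def[abs_def] by (intro tendsto_add dele_lim) auto

lemma GFs1: "0 < z \<Longrightarrow> z < 1 \<Longrightarrow> (1 - (1 - z)) * F 1 z =
   (P 1 1 - (1-z)*betae 1 1 z)*(F 1 z - f 0 1*((1-z)*gam z)) + (P 2 1 - (1-z)*betae 2 1 z)*(F 2 z - f 0 2*((1-z)*gam z))"
proof -
  assume z: "0 < z" "z < 1"
  have g11: "G (a 1 1) z = P 1 1 - (1-z) * betae 1 1 z" by (rule Ga_id) (use z in auto)
  have g21: "G (a 2 1) z = P 2 1 - (1-z) * betae 2 1 z" by (rule Ga_id) (use z in auto)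
  have B: "1 - G b z = (1-z) * gam z" using gam_id[of z] z by simp
  have "z * F 1 z = G (a 1 1) z * (F 1 z - f 0 1 * (1 - G b z)) + G (a 2 1) z * (F 2 z - f 0 2 * (1 - G b z))"
    using GF_stat[of 1 z] z by simp
  then show ?thesis unfolding g11 g21 B by simp
qed

lemma GFs2: "0 < z \<Longrightarrow> z < 1 \<Longrightarrow> (1 - (1 - z)) * F 2 z =
   (P 1 2 - (1-z)*betae 1 2 z)*(F 1 z - f 0 1*((1-z)*gam z)) + (P 2 2 - (1-z)*betae 2 2 z)*(F 2 z - f 0 2*((1-z)*gam z))"
proof -
  assume z: "0 < z" "z < 1"
  have g12: "G (a 1 2) z = P 1 2 - (1-z) * betae 1 2 z" by (rule Ga_id) (use z in auto)
  have g22: "G (a 2 2) z = P 2 2 - (1-z) * betae 2 2 z" by (rule Ga_id) (use z in auto)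
  have B: "1 - G b z = (1-z) * gam z" using gam_id[of z] z by simp
  have "z * F 2 z = G (a 1 2) z * (F 1 z - f 0 1 * (1 - G b z)) + G (a 2 2) z * (F 2 z - f 0 2 * (1 - G b z))"
    using GF_stat[of 2 z] z by simp
  then show ?thesis unfolding g12 g22 B by simp
qed

lemma stat_sum: "0 < z \<Longrightarrow> z < 1 \<Longrightarrow>
  cc - gam z * pf - bb 1 z * F 1 z - bb 2 z * F 2 z
   = (cc - F 1 z - F 2 z) - (1-z) * gam z * (bb 1 z * f 0 1 + bb 2 z * f 0 2)"
  unfolding bb_def pf_def
  by (rule sum_alg[OF _ GFs1 GFs2]) (use stochastic in auto)

lemma al_tt: "al 1 * tt 1 + al 2 * tt 2 = cc * rho a \<pi>"
  unfolding tt_pi rho_def by (simp add: algebra_simps)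

lemma balance: "cc - EB * pf - cc * rho a \<pi> = 0"
proof -
  have L1: "((\<lambda>z. cc - gam z * pf - bb 1 z * F 1 z - bb 2 z * F 2 z) \<longlongrightarrow>
     cc - EB * pf - al 1 * tt 1 - al 2 * tt 2) (at_left 1)"
    by (intro tendsto_intros gam_lim bb_lim F_lim) auto
  have L2: "((\<lambda>z. (cc - F 1 z - F 2 z) - (1-z) * gam z * (bb 1 z * f 0 1 + bb 2 z * f 0 2)) \<longlongrightarrow>
     (cc - tt 1 - tt 2) - (1 - 1) * EB * (al 1 * f 0 1 + al 2 * f 0 2)) (at_left 1)"
    by (intro tendsto_intros gam_lim bb_lim F_lim) auto
  have "eventually (\<lambda>z. (cc - F 1 z - F 2 z) - (1-z) * gam z * (bb 1 z * f 0 1 + bb 2 z * f 0 2)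
      = cc - gam z * pf - bb 1 z * F 1 z - bb 2 z * F 2 z) (at_left 1)"
    using ev_left1 by eventually_elim (use stat_sum in auto)
  from Lim_transform_eventually[OF L2 this] have
    "((\<lambda>z. cc - gam z * pf - bb 1 z * F 1 z - bb 2 z * F 2 z) \<longlongrightarrow>
     (cc - tt 1 - tt 2) - (1 - 1) * EB * (al 1 * f 0 1 + al 2 * f 0 2)) (at_left 1)" .
  from tendsto_unique[OF trivial_limit_at_left_real L1 this]
  have "cc - EB * pf - al 1 * tt 1 - al 2 * tt 2 = 0" unfolding cc_def by simp
  then show ?thesis using al_tt by simp
qed

lemma cc_one: "cc = 1"
proof -
  have "1 - rho a \<pi> \<le> EB * pf" using pf_lb unfolding pf_def .
  also have "EB * pf = cc * (1 - rho a \<pi>)" using balance by (simp add: algebra_simps)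
  finally have "1 * (1 - rho a \<pi>) \<le> cc * (1 - rho a \<pi>)" by simp
  then have "1 \<le> cc" using rho_lt1 by (simp add: mult_le_cancel_right)
  then show ?thesis using cc_le1 by simp
qed

lemma pf_val: "EB * pf = 1 - rho a \<pi>"
  using balance cc_one by simp

lemma F_ee: "z < 1 \<Longrightarrow> F i z = tt i - (1 - z) * ee i z"
  unfolding ee_def by simp

lemma Eq1: "0 < z \<Longrightarrow> z < 1 \<Longrightarrow>
  ((1 - P 1 1) - (1-z) + (1-z)*betae 1 1 z) * ee 1 z + (- P 2 1 + (1-z)*betae 2 1 z) * ee 2 z
   = - tt 1 + betae 1 1 z*tt 1 + betae 2 1 z*tt 2 + gam z*(P 1 1*f 0 1 + P 2 1*f 0 2)
     - (1-z)*gam z*(betae 1 1 z*f 0 1 + betae 2 1 z*f 0 2)"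
proof -
  assume z: "0 < z" "z < 1"
  have H: "tt 1 = tt 1 * P 1 1 + tt 2 * P 2 1" using tt_stat[of 1] by simp
  show ?thesis
    by (rule eq1_alg[OF _ H]) (use GFs1[OF z] z F_ee[of z 1] F_ee[of z 2] in auto)
qed

lemma bb_id: "0 \<le> z \<Longrightarrow> z \<le> 1 \<Longrightarrow> i \<in> {1,2} \<Longrightarrow> bb i z = al i - (1 - z) * dd2 i z"
  unfolding bb_def dd2_def alpha_row_def using betae_id[of i 1 z] betae_id[of i 2 z]
  by (simp add: algebra_simps)

lemma Eq2: "0 < z \<Longrightarrow> z < 1 \<Longrightarrow>
  (1 - bb 1 z) * ee 1 z + (1 - bb 2 z) * ee 2 z
   = eta z * pf + dd2 1 z * tt 1 + dd2 2 z * tt 2 + gam z * (bb 1 z * f 0 1 + bb 2 z * f 0 2)"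
proof -
  assume z: "0 < z" "z < 1"
  have H: "cc - EB*pf - (al 1*tt 1 + al 2*tt 2) = 0" using balance al_tt by simp
  have S: "cc - gam z * pf - bb 1 z * (tt 1 - (1-z)*ee 1 z) - bb 2 z * (tt 2 - (1-z)*ee 2 z)
      = (cc - (tt 1 - (1-z)*ee 1 z) - (tt 2 - (1-z)*ee 2 z)) - (1-z) * gam z * (bb 1 z * f 0 1 + bb 2 z * f 0 2)"
    using stat_sum[OF z] unfolding F_ee[OF z(2)] .
  show ?thesis
    by (rule eq2_alg[OF _ H cc_def pf_def bb_id bb_id gam_id2 S]) (use z in auto)
qed

end


lemma core_alg:
  fixes D p1 p2 a11 a12 a21 a22 r g1 g2 :: real
  assumes p: "p1 + p2 = 1" and r: "r = p1*(a11+a12) + p2*(a21+a22)" and g: "g1 + g2 = 1 - r"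
    and x: "x = p2 * D" and y: "y = p1 * D"
  shows "(- p1 + a11*p1 + a21*p2 + ((1 - x)*g1 + y*g2)) * ((a11+a12) - (a21+a22)) + D*((a11+a12)*g1 + (a21+a22)*g2)
     = r*D*(1-r) + (- r + (g1*(a11+a12) + g2*(a21+a22)) + r*(a11+a22) + a12*a21 - a11*a22)"
  using p r g x y by algebra

lemma fin_alg:
  fixes D K r EB R1 R2 N V fb F1 F2 p1 p2 ag al1 al2 :: real
  assumes D: "D \<noteq> 0" and K: "K = 1 - r" "K \<noteq> 0" and EB: "EB \<noteq> 0"
    and V: "V = p1*F1 + p2*F2 + r - r^2"
    and core: "R1*(al1-al2) + D*ag = r*D*K + N"
    and R2: "R2 = fb/2*(K/EB) + F1/2*p1 + F2/2*p2 + ag"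
  shows "(R1*(al1-al2) + R2*D)/(D*K) = r/2 + V/(2*K) + fb/(2*EB) + N/(D*K)"
proof -
  have c: "R1*(al1-al2) = r*D*K + N - D*ag" using core by simp
  have "(R1*(al1-al2) + R2*D)/(D*K) = (r*D*K + N - D*ag + R2*D)/(D*K)" unfolding c ..
  also have "\<dots> = r/2 + V/(2*K) + fb/(2*EB) + N/(D*K)"
    unfolding R2 V using D K EB by (simp add: field_simps power2_eq_square) (simp add: algebra_simps K(1))
  finally show ?thesis .
qed

context setting begin

definition "m11 z = (1 - P 1 1) - (1-z) + (1-z)*betae 1 1 z"
definition "m12 z = - P 2 1 + (1-z)*betae 2 1 z"
definition "r1 z = - tt 1 + betae 1 1 z*tt 1 + betae 2 1 z*tt 2 + gam z*(P 1 1*f 0 1 + P 2 1*f 0 2)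
     - (1-z)*gam z*(betae 1 1 z*f 0 1 + betae 2 1 z*f 0 2)"
definition "m21 z = 1 - bb 1 z"
definition "m22 z = 1 - bb 2 z"
definition "r2 z = eta z * pf + dd2 1 z * tt 1 + dd2 2 z * tt 2 + gam z * (bb 1 z * f 0 1 + bb 2 z * f 0 2)"

definition "R1L = - tt 1 + alpha a 1 1*tt 1 + alpha a 2 1*tt 2 + EB*(P 1 1*f 0 1 + P 2 1*f 0 2)"
definition "R2L = fmom2 b / 2 * pf + (fmom2 (a 1 1) / 2 + fmom2 (a 1 2) / 2) * tt 1
    + (fmom2 (a 2 1) / 2 + fmom2 (a 2 2) / 2) * tt 2 + EB * (al 1 * f 0 1 + al 2 * f 0 2)"
definition "D0 = (1 - P 1 1) * (1 - al 2) - (- P 2 1) * (1 - al 1)"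
definition "Lv = (R1L * ((1 - al 2) - (1 - al 1)) + R2L * ((1 - P 1 1) - (- P 2 1))) / D0"

lemma m11_lim: "(m11 \<longlongrightarrow> 1 - P 1 1) (at_left 1)"
proof -
  have "(m11 \<longlongrightarrow> (1 - P 1 1) - (1-1) + (1-1)*alpha a 1 1) (at_left 1)"
    unfolding m11_def[abs_def] by (intro tendsto_intros betae_lim) auto
  then show ?thesis by simp
qed

lemma m12_lim: "(m12 \<longlongrightarrow> - P 2 1) (at_left 1)"
proof -
  have "(m12 \<longlongrightarrow> - P 2 1 + (1-1)*alpha a 2 1) (at_left 1)"
    unfolding m12_def[abs_def] by (intro tendsto_intros betae_lim) auto
  then show ?thesis by simp
qed

lemma m21_lim: "(m21 \<longlongrightarrow> 1 - al 1) (at_left 1)"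
  unfolding m21_def[abs_def] by (intro tendsto_intros bb_lim) auto

lemma m22_lim: "(m22 \<longlongrightarrow> 1 - al 2) (at_left 1)"
  unfolding m22_def[abs_def] by (intro tendsto_intros bb_lim) auto

lemma r1_lim: "(r1 \<longlongrightarrow> R1L) (at_left 1)"
proof -
  have "(r1 \<longlongrightarrow> - tt 1 + alpha a 1 1*tt 1 + alpha a 2 1*tt 2 + EB*(P 1 1*f 0 1 + P 2 1*f 0 2)
     - (1-1)*EB*(alpha a 1 1*f 0 1 + alpha a 2 1*f 0 2)) (at_left 1)"
    unfolding r1_def[abs_def] by (intro tendsto_intros betae_lim gam_lim) auto
  then show ?thesis unfolding R1L_def by simp
qed

lemma r2_lim: "(r2 \<longlongrightarrow> R2L) (at_left 1)"
  unfolding r2_def[abs_def] R2L_def by (intro tendsto_intros eta_lim dd2_lim gam_lim bb_lim) auto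

lemma D0_eq: "D0 = S * (1 - rho a \<pi>)"
  unfolding D0_def rho_eq P12 using S_pos by (simp add: field_simps)

lemma D0_ne: "D0 \<noteq> 0" using D0_eq S_pos rho_lt1 by simp

lemma ee_lim: "((\<lambda>z. ee 1 z + ee 2 z) \<longlongrightarrow> Lv) (at_left 1)"
proof -
  have det_lim: "((\<lambda>z. m11 z * m22 z - m12 z * m21 z) \<longlongrightarrow> D0) (at_left 1)"
    unfolding D0_def by (intro tendsto_intros m11_lim m12_lim m21_lim m22_lim)
  have ev_det: "eventually (\<lambda>z. m11 z * m22 z - m12 z * m21 z \<noteq> 0) (at_left 1)"
    by (rule tendsto_imp_eventually_ne[OF det_lim D0_ne])
  have L: "((\<lambda>z. (r1 z * (m22 z - m21 z) + r2 z * (m11 z - m12 z)) / (m11 z * m22 z - m12 z * m21 z)) \<longlongrightarrow> Lv) (at_left 1)"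
    unfolding Lv_def D0_def[symmetric]
    by (intro tendsto_intros m11_lim m12_lim m21_lim m22_lim r1_lim r2_lim det_lim D0_ne)
  have "eventually (\<lambda>z. (r1 z * (m22 z - m21 z) + r2 z * (m11 z - m12 z)) / (m11 z * m22 z - m12 z * m21 z)
      = ee 1 z + ee 2 z) (at_left 1)"
    using ev_left1 ev_det
  proof eventually_elim
    case (elim z)
    have e1: "m11 z * ee 1 z + m12 z * ee 2 z = r1 z"
      using Eq1[of z] elim unfolding m11_def m12_def r1_def by simp
    have e2: "m21 z * ee 1 z + m22 z * ee 2 z = r2 z"
      using Eq2[of z] elim unfolding m21_def m22_def r2_def by simp
    show ?case using solve2[OF e1 e2 elim(2)] by simp
  qed
  from Lim_transform_eventually[OF L this] show ?thesis .
qed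

lemma ee_series: "0 \<le> z \<Longrightarrow> z < 1 \<Longrightarrow> ee 1 z + ee 2 z = (\<Sum>x. (f x 1 + f x 2) * sp x z)"
proof -
  assume z: "0 \<le> z" "z < 1"
  have s: "summable (\<lambda>x. f x i * sp x z) \<and> (\<Sum>x. f x i * sp x z) = ee i z" if i: "i \<in> {1,2}" for i
    using SL1[OF f_nonneg f_summable, of i z] i z unfolding ee_def tt_def F_def G_real by auto
  have "(\<Sum>x. (f x 1 + f x 2) * sp x z) = (\<Sum>x. f x 1 * sp x z + f x 2 * sp x z)"
    by (simp add: distrib_right)
  also have "\<dots> = (\<Sum>x. f x 1 * sp x z) + (\<Sum>x. f x 2 * sp x z)"
    using s[of 1] s[of 2] by (intro suminf_add[symmetric]) auto
  finally show ?thesis using s[of 1] s[of 2] by simp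
qed

lemma EX_hassum: "((\<lambda>x. real x * (f x 1 + f x 2)) has_sum Lv) UNIV"
proof (rule abel)
  show "0 \<le> f k 1 + f k 2" for k using f_nonneg[of 1 k] f_nonneg[of 2 k] by simp
  show "summable (\<lambda>k. f k 1 + f k 2)" using f_summable by (intro summable_add) auto
  have "eventually (\<lambda>z. ee 1 z + ee 2 z = (\<Sum>x. (f x 1 + f x 2) * sp x z)) (at_left 1)"
    using ev_left1 by eventually_elim (use ee_series in auto)
  from Lim_transform_eventually[OF ee_lim this]
  show "((\<lambda>z. \<Sum>x. (f x 1 + f x 2) * sp x z) \<longlongrightarrow> Lv) (at_left 1)" .
qed

end


lemma zh_alg:
  fixes z A11 A12 A21 A22 H1 H2 F1 F2 B p1 p2 :: complex
  assumes E1: "F1 = H1*A11 + H2*A21" and E2: "F2 = H1*A12 + H2*A22"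
    and E3: "z*H1 = F1 - p1*(1-B)" and E4: "z*H2 = F2 - p2*(1-B)"
    and D: "(z - A11)*(z - A22) - A12*A21 = 0"
  shows "(1-B)*(A12*p1 + (z - A11)*p2) = 0" and "(1-B)*((z - A22)*p1 + A21*p2) = 0"
  using assms by algebra+

context setting begin

lemma core_loc: "R1L * (al 1 - al 2) + S * (EB*(f 0 1 * al 1 + f 0 2 * al 2))
   = rho a \<pi> * S * (1 - rho a \<pi>) + (- rho a \<pi> + EB*(f 0 1 * al 1 + f 0 2 * al 2)
      + rho a \<pi> * (alpha a 1 1 + alpha a 2 2) + alpha a 1 2 * alpha a 2 1 - alpha a 1 1 * alpha a 2 2)"
proof -
  have h1: "\<pi> 1 + \<pi> 2 = 1" using stationary(3) .
  have h2: "rho a \<pi> = \<pi> 1 * (alpha a 1 1 + alpha a 1 2) + \<pi> 2 * (alpha a 2 1 + alpha a 2 2)"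
    unfolding rho_def alpha_row_def ..
  have h3: "EB * f 0 1 + EB * f 0 2 = 1 - rho a \<pi>" using pf_val unfolding pf_def by (simp add: distrib_left)
  have h4: "P 1 2 = \<pi> 2 * S" using pi2 S_pos by simp
  have h5: "P 2 1 = \<pi> 1 * S" using pi1 S_pos by simp
  have h6: "P 1 1 = 1 - P 1 2" by (rule P12)
  have t1: "tt 1 = \<pi> 1" and t2: "tt 2 = \<pi> 2" using tt_pi cc_one by auto
  show ?thesis unfolding R1L_def alpha_row_def t1 t2 using h1 h2 h3 h4 h5 h6 by algebra
qed

lemma Lv_target: "Lv = rho a \<pi> / 2 + VarA a \<pi> / (2 * (1 - rho a \<pi>))
            + fmom2 b / (2 * mom1 b)
            + (- rho a \<pi> + mom1 b * (f 0 1 * alpha_row a 1 + f 0 2 * alpha_row a 2)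
               + rho a \<pi> * (alpha a 1 1 + alpha a 2 2)
               + alpha a 1 2 * alpha a 2 1 - alpha a 1 1 * alpha a 2 2)
              / ((Pm a 1 2 + Pm a 2 1) * (1 - rho a \<pi>))"
proof -
  have Lv1: "Lv = (R1L * (al 1 - al 2) + R2L * S) / (S * (1 - rho a \<pi>))"
    unfolding Lv_def D0_eq P12 by simp
  have EB0: "EB \<noteq> 0" using EB_ge1 by simp
  have pfv: "pf = (1 - rho a \<pi>) / EB" using pf_val EB0 by (simp add: field_simps)
  have t1: "tt 1 = \<pi> 1" and t2: "tt 2 = \<pi> 2" using tt_pi cc_one by auto
  have R2: "R2L = fmom2 b / 2 * ((1 - rho a \<pi>) / EB) + (fmom2 (a 1 1) + fmom2 (a 1 2)) / 2 * \<pi> 1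
      + (fmom2 (a 2 1) + fmom2 (a 2 2)) / 2 * \<pi> 2 + EB * (f 0 1 * al 1 + f 0 2 * al 2)"
    unfolding R2L_def pfv t1 t2 by (simp add: algebra_simps add_divide_distrib)
  have V: "VarA a \<pi> = \<pi> 1 * (fmom2 (a 1 1) + fmom2 (a 1 2)) + \<pi> 2 * (fmom2 (a 2 1) + fmom2 (a 2 2))
      + rho a \<pi> - (rho a \<pi>)^2" unfolding VarA_def ..
  have "Lv = rho a \<pi> / 2 + VarA a \<pi> / (2 * (1 - rho a \<pi>)) + fmom2 b / (2 * EB)
      + (- rho a \<pi> + EB*(f 0 1 * al 1 + f 0 2 * al 2)
      + rho a \<pi> * (alpha a 1 1 + alpha a 2 2) + alpha a 1 2 * alpha a 2 1 - alpha a 1 1 * alpha a 2 2) / (S * (1 - rho a \<pi>))"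
    unfolding Lv1
  proof (rule fin_alg[OF _ refl _ EB0 V core_loc R2])
    show "S \<noteq> 0" using S_pos by simp
    show "1 - rho a \<pi> \<noteq> 0" using rho_lt1 by simp
  qed
  then show ?thesis by simp
qed

lemma B_ne1:
  fixes z :: complex assumes z: "norm z < 1" shows "1 - G b z \<noteq> 0"
proof -
  have sb: "summable (\<lambda>m. b m * norm z)" using b_summable by (intro summable_mult2)
  have sn: "summable (\<lambda>m. norm (of_real (b m) * z^m))"
    by (rule norm_pow_summable) (use b_summable b0 z in auto)
  have "norm (G b z) \<le> (\<Sum>m. norm (of_real (b m) * z^m))"
    unfolding G_def by (rule summable_norm[OF sn])
  also have "\<dots> \<le> (\<Sum>m. b m * norm z)"
  proof (rule suminf_le[OF _ sn sb])
    fix m :: nat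
    show "norm (of_real (b m) * z^m) \<le> b m * norm z"
    proof (cases m)
      case 0 then show ?thesis using b_pos by simp
    next
      case (Suc k)
      have "norm z ^ m \<le> norm z ^ 1" using z Suc by (intro power_decreasing) auto
      then have "b m * norm z ^ m \<le> b m * norm z" using b0[of m] by (intro mult_left_mono) auto
      then show ?thesis using b0[of m] by (simp add: norm_mult norm_power)
    qed
  qed
  also have "\<dots> = norm z" using b_sum suminf_mult2[OF b_summable, of "norm z"] by simp
  finally have "norm (G b z) < 1" using z by simp
  then show ?thesis by auto
qed

lemma zh_part:
  fixes zh :: complex
  assumes z: "norm zh < 1"
    and D: "(zh - gf (a 1 1) zh) * (zh - gf (a 2 2) zh) - gf (a 1 2) zh * gf (a 2 1) zh = 0"
    and n1: "gf (a 1 1) zh + gf (a 1 2) zh - zh \<noteq> 0"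
    and n2: "gf (a 2 1) zh + gf (a 2 2) zh - zh \<noteq> 0"
  shows "complex_of_real (f 0 1) = complex_of_real ((1 - rho a \<pi>) / mom1 b)
                 * (gf (a 1 1) zh - zh) / (gf (a 1 1) zh + gf (a 1 2) zh - zh)
            \<and> complex_of_real (f 0 2) = complex_of_real ((1 - rho a \<pi>) / mom1 b)
                 * (gf (a 2 2) zh - zh) / (gf (a 2 1) zh + gf (a 2 2) zh - zh)"
proof -
  have z1: "norm zh \<le> 1" using z by simp
  have fq0: "\<And>x i. i \<in> {1,2} \<Longrightarrow> 0 \<le> fq (x, i)" unfolding fq_def using f_nonneg by simp
  have fqs: "\<And>i. i \<in> {1,2} \<Longrightarrow> summable (\<lambda>x. fq (x, i))" unfolding fq_def using f_summable by simp
  define H where "H i = G (Hc fq b i) zh" for i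
  define Fc where "Fc i = G (\<lambda>x. f x i) zh" for i
  have FS: "Fc j = H 1 * G (a 1 j) zh + H 2 * G (a 2 j) zh" if j: "j \<in> {1,2}" for j
  proof -
    have "(\<lambda>y. of_real (qstep a b fq (y, j)) * zh^y) sums (\<Sum>i\<in>{1,2}. G (Hc fq b i) zh * G (a i j) zh)"
      by (rule GF_step[OF a_nonneg a_summable b0 b_summable fq0 fqs j z1])
    moreover have "(\<lambda>y. qstep a b fq (y, j)) = (\<lambda>y. f y j)" using fq_stat[OF j] by auto
    ultimately have "(\<lambda>y. of_real (f y j) * zh^y) sums (\<Sum>i\<in>{1,2}. G (Hc fq b i) zh * G (a i j) zh)"
      by metis
    then show ?thesis unfolding Fc_def H_def G_def by (simp add: sums_iff)
  qed
  have HS: "zh * H i = Fc i - of_real (f 0 i) * (1 - G b zh)" if i: "i \<in> {1,2}" for i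
  proof -
    have "zh * G (Hc fq b i) zh = G (\<lambda>x. fq (x, i)) zh - of_real (fq (0, i)) * (1 - G b zh)"
    proof (rule H_rel[where b=b and q=fq, OF _ _ b_pos z1])
      show "summable (\<lambda>k. \<bar>fq (k, i)\<bar>)" using fq0[OF i] fqs[OF i] by simp
      show "summable (\<lambda>k. \<bar>b k\<bar>)" using b0 b_summable by simp
    qed
    then show ?thesis unfolding H_def Fc_def fq_def by simp
  qed
  have D': "(zh - G (a 1 1) zh) * (zh - G (a 2 2) zh) - G (a 1 2) zh * G (a 2 1) zh = 0"
    using D unfolding gf_G .
  have K: "(1 - G b zh)*(G (a 1 2) zh * of_real (f 0 1) + (zh - G (a 1 1) zh) * of_real (f 0 2)) = 0"
       "(1 - G b zh)*((zh - G (a 2 2) zh) * of_real (f 0 1) + G (a 2 1) zh * of_real (f 0 2)) = 0"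
    using zh_alg[OF FS[of 1] FS[of 2] HS[of 1] HS[of 2] D'] by auto
  have B1: "1 - G b zh \<noteq> 0" by (rule B_ne1[OF z])
  have K1: "G (a 1 2) zh * of_real (f 0 1) + (zh - G (a 1 1) zh) * of_real (f 0 2) = 0" using K(1) B1 by simp
  have K2: "(zh - G (a 2 2) zh) * of_real (f 0 1) + G (a 2 1) zh * of_real (f 0 2) = 0" using K(2) B1 by simp
  define c0 where "c0 = (1 - rho a \<pi>) / mom1 b"
  have sum0: "f 0 1 + f 0 2 = c0" unfolding c0_def using pf_val EB_ge1 unfolding pf_def by (simp add: field_simps)
  have csum: "of_real (f 0 1) + of_real (f 0 2) = (of_real c0 :: complex)" using sum0 by (metis of_real_add)
  have e1: "of_real (f 0 1) * (G (a 1 1) zh + G (a 1 2) zh - zh) = of_real c0 * (G (a 1 1) zh - zh)"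
    using K1 csum by algebra
  have e2: "of_real (f 0 2) * (G (a 2 1) zh + G (a 2 2) zh - zh) = of_real c0 * (G (a 2 2) zh - zh)"
    using K2 csum by algebra
  have n1': "G (a 1 1) zh + G (a 1 2) zh - zh \<noteq> 0" using n1 unfolding gf_G .
  have n2': "G (a 2 1) zh + G (a 2 2) zh - zh \<noteq> 0" using n2 unfolding gf_G .
  show ?thesis unfolding gf_G c0_def[symmetric]
    using e1 e2 n1' n2' by (simp add: field_simps)
qed

end

theorem mainTheorem12:
  fixes a :: "nat \<Rightarrow> nat \<Rightarrow> nat \<Rightarrow> real" and b :: "nat \<Rightarrow> real"
    and \<pi> :: "nat \<Rightarrow> real" and f :: "nat \<Rightarrow> nat \<Rightarrow> real" and x0 i0 :: nat
  assumes a_nonneg: "\<forall>i\<in>{1,2}. \<forall>j\<in>{1,2}. \<forall>k. a i j k \<ge> 0"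
    and a_summable: "\<forall>i\<in>{1,2}. \<forall>j\<in>{1,2}. summable (a i j)"
    and stochastic: "\<forall>i\<in>{1,2}. Pm a i 1 + Pm a i 2 = 1"
    and irreducible: "Pm a 1 2 > 0" "Pm a 2 1 > 0"
    and stationary: "\<pi> 1 \<ge> 0" "\<pi> 2 \<ge> 0" "\<pi> 1 + \<pi> 2 = 1"
      "\<forall>j\<in>{1,2}. \<pi> j = \<pi> 1 * Pm a 1 j + \<pi> 2 * Pm a 2 j"
    and a_second: "\<forall>i\<in>{1,2}. \<forall>j\<in>{1,2}. summable (\<lambda>k. real k * (real k - 1) * a i j k)"
    and rho_lt1: "rho a \<pi> < 1"
    and b_nonneg: "\<forall>m. b m \<ge> 0" and b_pos: "b 0 = 0"
    and b_summable: "summable b" and b_sum: "suminf b = 1"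
    and b_second: "summable (\<lambda>m. (real m)^2 * b m)"
    and init: "i0 \<in> {1,2}"
    and limit: "\<forall>x. \<forall>j\<in>{1,2}. (\<lambda>n. qdist a b x0 i0 n (x, j)) \<longlonglongrightarrow> f x j"
  shows "((\<lambda>x. real x * (f x 1 + f x 2)) has_sum
           (rho a \<pi> / 2 + VarA a \<pi> / (2 * (1 - rho a \<pi>))
            + fmom2 b / (2 * mom1 b)
            + (- rho a \<pi> + mom1 b * (f 0 1 * alpha_row a 1 + f 0 2 * alpha_row a 2)
               + rho a \<pi> * (alpha a 1 1 + alpha a 2 2)
               + alpha a 1 2 * alpha a 2 1 - alpha a 1 1 * alpha a 2 2)
              / ((Pm a 1 2 + Pm a 2 1) * (1 - rho a \<pi>)))) UNIV
       \<and> (\<forall>zh. norm zh < 1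
              \<and> (zh - gf (a 1 1) zh) * (zh - gf (a 2 2) zh) - gf (a 1 2) zh * gf (a 2 1) zh = 0
              \<and> gf (a 1 1) zh + gf (a 1 2) zh - zh \<noteq> 0
              \<and> gf (a 2 1) zh + gf (a 2 2) zh - zh \<noteq> 0
          \<longrightarrow> complex_of_real (f 0 1) = complex_of_real ((1 - rho a \<pi>) / mom1 b)
                 * (gf (a 1 1) zh - zh) / (gf (a 1 1) zh + gf (a 1 2) zh - zh)
            \<and> complex_of_real (f 0 2) = complex_of_real ((1 - rho a \<pi>) / mom1 b)
                 * (gf (a 2 2) zh - zh) / (gf (a 2 1) zh + gf (a 2 2) zh - zh))"
proof -
  interpret L: setting a b \<pi> f x0 i0
    by (unfold_locales) (fact a_nonneg a_summable stochastic irreducible stationary a_second rho_lt1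
        b_nonneg b_pos b_summable b_sum b_second init limit)+
  show ?thesis
    using L.EX_hassum L.Lv_target L.zh_part by auto
qed


end
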